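(* There is a constant $c$ such that for every positive integer $n$, the number of minimal $P_n$-obstructions and the number of minimal $C_n$-obstructions (each counted up to isomorphism) are both at most $c\,n^2$.
   Context: All graphs are finite, simple and loopless. $P_n$ and $C_n$ denote the path and cycle on $n$ vertices ($P_1=K_1$, $P_2=K_2$). A full-homomorphism $\varphi\colon G\to H$ is a map $V(G)\to V(H)$ such that for all $x,y\in V(G)$, $xy\in E(G)$ if and only if $\varphi(x)\varphi(y)\in E(H)$. A full $H$-colouring of $G$ is a full-homomorphism $G\to H$. A minimal $H$-obstruction is a graph $G$ that admits no full $H$-colouring while every proper induced subgraph of $G$ admits one. *)

theory Defs
  imports Complex_Main
begin

text \<open>A finite simple loopless graph: a finite vertex set V and a set E of
  2-element subsets of V (vertices are natural numbers; every finite graph is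
  isomorphic to such a graph).\<close>
type_synonym graph = "nat set \<times> nat set set"

definition verts :: "graph \<Rightarrow> nat set" where "verts G = fst G"
definition edges :: "graph \<Rightarrow> nat set set" where "edges G = snd G"

definition wf_graph :: "graph \<Rightarrow> bool" where
  "wf_graph G \<longleftrightarrow> finite (verts G) \<and>
     (\<forall>e\<in>edges G. \<exists>x y. x \<noteq> y \<and> x \<in> verts G \<and> y \<in> verts G \<and> e = {x, y})"

definition adj :: "graph \<Rightarrow> nat \<Rightarrow> nat \<Rightarrow> bool" where
  "adj G x y \<longleftrightarrow> {x, y} \<in> edges G"

definition full_hom :: "(nat \<Rightarrow> nat) \<Rightarrow> graph \<Rightarrow> graph \<Rightarrow> bool" where
  "full_hom \<phi> G H \<longleftrightarrow> (\<forall>x\<in>verts G. \<phi> x \<in> verts H) \<and>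
     (\<forall>x\<in>verts G. \<forall>y\<in>verts G. adj G x y \<longleftrightarrow> adj H (\<phi> x) (\<phi> y))"

definition full_colourable :: "graph \<Rightarrow> graph \<Rightarrow> bool" where
  "full_colourable G H \<longleftrightarrow> (\<exists>\<phi>. full_hom \<phi> G H)"

definition induced :: "graph \<Rightarrow> nat set \<Rightarrow> graph" where
  "induced G S = (S, {e \<in> edges G. e \<subseteq> S})"

definition minimal_obstruction :: "graph \<Rightarrow> graph \<Rightarrow> bool" where
  "minimal_obstruction H G \<longleftrightarrow> wf_graph G \<and> \<not> full_colourable G H \<and>
     (\<forall>S. S \<subset> verts G \<longrightarrow> full_colourable (induced G S) H)"

definition graph_iso :: "graph \<Rightarrow> graph \<Rightarrow> bool" where
  "graph_iso G H \<longleftrightarrow> (\<exists>f. bij_betw f (verts G) (verts H) \<and>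
     (\<forall>x\<in>verts G. \<forall>y\<in>verts G. adj G x y \<longleftrightarrow> adj H (f x) (f y)))"

definition path_graph :: "nat \<Rightarrow> graph" where
  "path_graph n = ({0..<n}, {{i, Suc i} | i. Suc i < n})"

text \<open>Cycle C_n on vertices 0..n-1 (meaningful for n \<ge> 3).\<close>
definition cycle_graph :: "nat \<Rightarrow> graph" where
  "cycle_graph n = ({0..<n}, {{i, (Suc i) mod n} | i. i < n})"

definition obstructions_up_to_iso_at_most :: "graph \<Rightarrow> real \<Rightarrow> bool" where
  "obstructions_up_to_iso_at_most H N \<longleftrightarrow>
     (\<forall>\<S>. finite \<S> \<longrightarrow> (\<forall>G\<in>\<S>. minimal_obstruction H G) \<longrightarrow>
        (\<forall>G\<in>\<S>. \<forall>G'\<in>\<S>. G \<noteq> G' \<longrightarrow> \<not> graph_iso G G') \<longrightarrow>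
        real (card \<S>) \<le> N)"

end

theory Submission
  imports Defs
begin


definition pdet :: "graph \<Rightarrow> bool" where
 "pdet G \<longleftrightarrow> (\<forall>x\<in>verts G. \<forall>y\<in>verts G. x \<noteq> y \<longrightarrow> \<not> adj G x y \<longrightarrow>
     (\<exists>z\<in>verts G. adj G x z \<noteq> adj G y z))"

definition isom :: "(nat \<Rightarrow> nat) \<Rightarrow> graph \<Rightarrow> graph \<Rightarrow> bool" where
 "isom f G G' \<longleftrightarrow> bij_betw f (verts G) (verts G') \<and>
    (\<forall>x\<in>verts G. \<forall>y\<in>verts G. adj G x y \<longleftrightarrow> adj G' (f x) (f y))"

lemma adj_sym: "adj G x y = adj G y x"
  unfolding adj_def by (simp add: insert_commute)

lemma wf_adj: "wf_graph G \<Longrightarrow> adj G x y \<Longrightarrow> x \<in> verts G \<and> y \<in> verts G \<and> x \<noteq> y"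
proof -
  assume "wf_graph G" "adj G x y"
  then obtain a b where "a \<noteq> b" "a \<in> verts G" "b \<in> verts G" "{x,y} = {a,b}"
    unfolding wf_graph_def adj_def by blast
  then show ?thesis by (auto simp: doubleton_eq_iff)
qed

lemma wf_noloop: "wf_graph G \<Longrightarrow> \<not> adj G x x"
  using wf_adj by blast

lemma verts_induced[simp]: "verts (induced G S) = S"
  by (simp add: induced_def verts_def)

lemma adj_induced: "adj (induced G S) x y \<longleftrightarrow> adj G x y \<and> x \<in> S \<and> y \<in> S"
  by (auto simp: induced_def adj_def edges_def)

lemma wf_induced: "wf_graph G \<Longrightarrow> S \<subseteq> verts G \<Longrightarrow> wf_graph (induced G S)"
proof -
  assume w: "wf_graph G" and S: "S \<subseteq> verts G"
  have f: "finite S" using w S finite_subset unfolding wf_graph_def by blast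
  have "\<exists>x y. x \<noteq> y \<and> x \<in> S \<and> y \<in> S \<and> e = {x, y}" if e: "e \<in> edges (induced G S)" for e
  proof -
    have e1: "e \<in> edges G" "e \<subseteq> S" using e by (auto simp: induced_def edges_def)
    then obtain x y where "x \<noteq> y" "e = {x,y}" using w unfolding wf_graph_def by blast
    then show ?thesis using e1 by auto
  qed
  then show ?thesis using f unfolding wf_graph_def by simp
qed

lemma graph_iso_isom: "graph_iso G G' \<longleftrightarrow> (\<exists>f. isom f G G')"
  by (simp add: graph_iso_def isom_def)

lemma full_hom_comp: "full_hom \<phi> G H \<Longrightarrow> full_hom \<psi> H K \<Longrightarrow> full_hom (\<psi> \<circ> \<phi>) G K"
  unfolding full_hom_def by auto

lemma full_hom_induced: "full_hom \<phi> G H \<Longrightarrow> S \<subseteq> verts G \<Longrightarrow> full_hom \<phi> (induced G S) H"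
  unfolding full_hom_def by (auto simp: adj_induced)

lemma isom_full_hom: "isom f G G' \<Longrightarrow> full_hom f G G'"
  unfolding isom_def full_hom_def bij_betw_def by auto

lemma isom_inv: assumes "isom f G G'" shows "isom (inv_into (verts G) f) G' G"
proof -
  have b: "bij_betw f (verts G) (verts G')" using assms by (simp add: isom_def)
  have bi: "bij_betw (inv_into (verts G) f) (verts G') (verts G)" using b bij_betw_inv_into by blast
  show ?thesis unfolding isom_def
  proof (intro conjI bi ballI)
    fix x y assume x: "x \<in> verts G'" and y: "y \<in> verts G'"
    have "inv_into (verts G) f x \<in> verts G" "inv_into (verts G) f y \<in> verts G"
      using bi x y bij_betwE by blast+
    moreover have "f (inv_into (verts G) f x) = x" "f (inv_into (verts G) f y) = y"
      using b x y by (meson bij_betw_inv_into_right)+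
    ultimately show "adj G' x y = adj G (inv_into (verts G) f x) (inv_into (verts G) f y)"
      using assms unfolding isom_def by metis
  qed
qed

lemma isom_comp: "isom f G G' \<Longrightarrow> isom g G' G'' \<Longrightarrow> isom (g \<circ> f) G G''"
proof -
  assume a: "isom f G G'" "isom g G' G''"
  have b: "bij_betw (g \<circ> f) (verts G) (verts G'')"
    using a bij_betw_trans unfolding isom_def by blast
  have "adj G x y = adj G'' ((g \<circ> f) x) ((g \<circ> f) y)" if "x \<in> verts G" "y \<in> verts G" for x y
  proof -
    have "f x \<in> verts G'" "f y \<in> verts G'" using a that unfolding isom_def by (meson bij_betwE)+
    then show ?thesis using a that unfolding isom_def by simp
  qed
  then show ?thesis using b unfolding isom_def by blast
qed

lemma graph_iso_sym: "graph_iso G G' \<Longrightarrow> graph_iso G' G"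
  unfolding graph_iso_isom by (meson isom_inv)

lemma graph_iso_trans: "graph_iso G G' \<Longrightarrow> graph_iso G' G'' \<Longrightarrow> graph_iso G G''"
  unfolding graph_iso_isom by (meson isom_comp)

lemma colourable_iso: "isom f G G' \<Longrightarrow> full_colourable G' H \<Longrightarrow> full_colourable G H"
  unfolding full_colourable_def by (meson full_hom_comp isom_full_hom)

lemma isom_induced:
  assumes "isom f G G'" "S \<subseteq> verts G"
  shows "isom f (induced G S) (induced G' (f ` S))"
proof -
  have b: "bij_betw f S (f ` S)" using assms unfolding isom_def bij_betw_def
    by (meson inj_on_subset inj_on_imp_bij_betw)
  have "adj (induced G S) x y = adj (induced G' (f ` S)) (f x) (f y)" if "x \<in> S" "y \<in> S" for x y
    using assms that unfolding isom_def by (auto simp: adj_induced)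
  then show ?thesis using b unfolding isom_def by simp
qed

lemma obstruction_iso:
  assumes ob: "minimal_obstruction H G" and i: "isom f G G'" and wf: "wf_graph G'"
  shows "minimal_obstruction H G'"
proof -
  have b: "bij_betw f (verts G) (verts G')" using i by (simp add: isom_def)
  have nc: "\<not> full_colourable G' H"
    using ob colourable_iso[OF i] unfolding minimal_obstruction_def by blast
  have "full_colourable (induced G' S') H" if S': "S' \<subset> verts G'" for S'
  proof -
    let ?S = "{x \<in> verts G. f x \<in> S'}"
    have fS: "f ` ?S = S'"
    proof
      show "f ` ?S \<subseteq> S'" by blast
      show "S' \<subseteq> f ` ?S"
      proof
        fix y assume y: "y \<in> S'"
        then have "y \<in> verts G'" using S' by blast
        then obtain x where "x \<in> verts G" "f x = y" using b by (metis bij_betw_imp_surj_on imageE)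
        then show "y \<in> f ` ?S" using y by blast
      qed
    qed
    have "?S \<subset> verts G"
    proof
      show "?S \<subseteq> verts G" by blast
      show "?S \<noteq> verts G"
      proof
        assume "?S = verts G"
        then have "f ` verts G = S'" using fS by simp
        moreover have "f ` verts G = verts G'" using b by (simp add: bij_betw_def)
        ultimately show False using S' by blast
      qed
    qed
    then have c: "full_colourable (induced G ?S) H" using ob unfolding minimal_obstruction_def by blast
    have "isom f (induced G ?S) (induced G' S')"
      using isom_induced[OF i, of ?S] fS by simp
    from colourable_iso[OF isom_inv[OF this] c] show ?thesis .
  qed
  then show ?thesis using wf nc unfolding minimal_obstruction_def by blast
qed

lemma full_hom_same:
  assumes "full_hom \<phi> F H" "wf_graph H" "x \<in> verts F" "y \<in> verts F" "\<phi> x = \<phi> y"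
  shows "\<not> adj F x y \<and> (\<forall>z\<in>verts F. adj F x z = adj F y z)"
proof
  have A: "\<And>u v. u \<in> verts F \<Longrightarrow> v \<in> verts F \<Longrightarrow> adj F u v = adj H (\<phi> u) (\<phi> v)"
    using assms(1) by (simp add: full_hom_def)
  show "\<not> adj F x y" using A[OF assms(3,4)] assms(5) wf_noloop[OF assms(2)] by simp
  show "\<forall>z\<in>verts F. adj F x z = adj F y z" using A assms(3,4,5) by simp
qed

lemma full_hom_inj:
  assumes "full_hom \<phi> F H" "wf_graph H" "pdet F"
  shows "inj_on \<phi> (verts F)"
  unfolding inj_on_def
proof (intro ballI impI)
  fix x y assume "x \<in> verts F" "y \<in> verts F" "\<phi> x = \<phi> y"
  from full_hom_same[OF assms(1,2) this] assms(3) \<open>x \<in> verts F\<close> \<open>y \<in> verts F\<close>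
  show "x = y" unfolding pdet_def by blast
qed

lemma obstruction_pdet:
  assumes ob: "minimal_obstruction H G" and wfH: "wf_graph H"
  shows "pdet G"
  unfolding pdet_def
proof (intro ballI impI)
  fix x y assume x: "x \<in> verts G" and y: "y \<in> verts G" and ne: "x \<noteq> y" and na: "\<not> adj G x y"
  show "\<exists>z\<in>verts G. adj G x z \<noteq> adj G y z"
  proof (rule ccontr)
    assume "\<not> ?thesis"
    then have tw: "\<And>z. z \<in> verts G \<Longrightarrow> adj G x z = adj G y z" by blast
    let ?S = "verts G - {x}"
    have "?S \<subset> verts G" using x by blast
    then obtain \<phi> where phi: "full_hom \<phi> (induced G ?S) H"
      using ob unfolding minimal_obstruction_def full_colourable_def by blast
    have yS: "y \<in> ?S" using y ne by blast
    have V: "\<And>a. a \<in> ?S \<Longrightarrow> \<phi> a \<in> verts H" using phi unfolding full_hom_def by simp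
    have A: "\<And>a b. a \<in> ?S \<Longrightarrow> b \<in> ?S \<Longrightarrow> adj G a b = adj H (\<phi> a) (\<phi> b)"
      using phi unfolding full_hom_def by (simp add: adj_induced)
    define \<psi> where "\<psi> = (\<lambda>a. if a = x then \<phi> y else \<phi> a)"
    have psiS: "\<And>a. a \<in> ?S \<Longrightarrow> \<psi> a = \<phi> a" unfolding \<psi>_def by simp
    have psix: "\<psi> x = \<phi> y" unfolding \<psi>_def by simp
    have nlG: "\<And>a. \<not> adj G a a" using ob wf_noloop unfolding minimal_obstruction_def by blast
    have nlH: "\<And>a. \<not> adj H a a" using wfH wf_noloop by blast
    have B: "adj G u w = adj H (\<psi> u) (\<psi> w)" if u: "u \<in> verts G" and w: "w \<in> verts G" for u w
    proof (cases "u = x")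
      case True
      show ?thesis
      proof (cases "w = x")
        case True then show ?thesis using \<open>u = x\<close> nlG nlH by simp
      next
        case False
        then have wS: "w \<in> ?S" using w by blast
        have "adj G u w = adj G y w" using tw[OF w] \<open>u = x\<close> by simp
        also have "\<dots> = adj H (\<phi> y) (\<phi> w)" using A[OF yS wS] .
        finally show ?thesis using psix psiS[OF wS] \<open>u = x\<close> by simp
      qed
    next
      case False
      then have uS: "u \<in> ?S" using u by blast
      show ?thesis
      proof (cases "w = x")
        case True
        have "adj G u w = adj G w u" by (rule adj_sym)
        also have "\<dots> = adj G y u" using tw[OF u] \<open>w = x\<close> by simp
        also have "\<dots> = adj G u y" by (rule adj_sym)
        also have "\<dots> = adj H (\<phi> u) (\<phi> y)" using A[OF uS yS] .
        finally show ?thesis using psix psiS[OF uS] \<open>w = x\<close> by simp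
      next
        case False
        then have wS: "w \<in> ?S" using w by blast
        show ?thesis using A[OF uS wS] psiS[OF uS] psiS[OF wS] by simp
      qed
    qed
    have "\<psi> u \<in> verts H" if "u \<in> verts G" for u
      using V[OF yS] V that psix psiS by (cases "u = x") auto
    then have "full_hom \<psi> G H" using B unfolding full_hom_def by blast
    then show False using ob unfolding minimal_obstruction_def full_colourable_def by blast
  qed
qed



definition lad :: "nat \<Rightarrow> nat \<Rightarrow> bool" where "lad a b \<longleftrightarrow> b = Suc a \<or> a = Suc b"

definition comp :: "nat set \<Rightarrow> nat \<Rightarrow> nat \<Rightarrow> bool" where
  "comp A s t \<longleftrightarrow> s \<le> t \<and> {s..t} \<subseteq> A \<and> (\<forall>x. Suc x = s \<longrightarrow> x \<notin> A) \<and> Suc t \<notin> A"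

lemma lad_sym: "lad a b = lad b a" unfolding lad_def by auto

lemma compD:
  assumes "comp A s t"
  shows "s \<le> t" "\<And>x. s \<le> x \<Longrightarrow> x \<le> t \<Longrightarrow> x \<in> A" "\<And>x. Suc x = s \<Longrightarrow> x \<notin> A" "Suc t \<notin> A"
  using assms unfolding comp_def by auto

lemma compI:
  assumes "s \<le> t" "\<And>x. s \<le> x \<Longrightarrow> x \<le> t \<Longrightarrow> x \<in> A" "\<And>x. Suc x = s \<Longrightarrow> x \<notin> A" "Suc t \<notin> A"
  shows "comp A s t"
  using assms unfolding comp_def by auto

lemma comp_exists:
  assumes fin: "finite A" and q: "q \<in> A"
  shows "\<exists>s t. comp A s t \<and> s \<le> q \<and> q \<le> t"
proof -
  define s where "s = (LEAST x. {x..q} \<subseteq> A)"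
  have P: "{s..q} \<subseteq> A" unfolding s_def by (rule LeastI[of _ q]) (use q in auto)
  have sq: "s \<le> q" unfolding s_def by (rule Least_le) (use q in auto)
  have sm: "x \<notin> A" if "Suc x = s" for x
  proof
    assume "x \<in> A"
    have "{x..q} \<subseteq> A"
    proof
      fix z assume z: "z \<in> {x..q}"
      show "z \<in> A"
      proof (cases "z = x")
        case True then show ?thesis using \<open>x \<in> A\<close> by simp
      next
        case False
        then have "z \<in> {s..q}" using z that by auto
        then show ?thesis using P by blast
      qed
    qed
    then have "s \<le> x" unfolding s_def by (rule Least_le)
    then show False using that by simp
  qed
  define m where "m = Max (insert q A)"
  have mA: "Suc m \<notin> A"
  proof
    assume "Suc m \<in> A"
    then have "Suc m \<le> m" unfolding m_def using fin Max_ge[of "insert q A" "Suc m"] by simp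
    then show False by simp
  qed
  have qm: "q \<le> m" unfolding m_def using fin by simp
  define t where "t = (LEAST y. q \<le> y \<and> Suc y \<notin> A)"
  have t1: "q \<le> t \<and> Suc t \<notin> A" unfolding t_def by (rule LeastI[of _ m]) (use mA qm in auto)
  have t2: "Suc y \<in> A" if "q \<le> y" "y < t" for y
    using not_less_Least[of y "\<lambda>y. q \<le> y \<and> Suc y \<notin> A"] that unfolding t_def by blast
  have t3: "q + d \<in> A" if "q + d \<le> t" for d
    using that
  proof (induction d)
    case 0 then show ?case using q by simp
  next
    case (Suc d)
    then have "q + d \<in> A" by simp
    moreover have "Suc (q + d) \<in> A" using t2[of "q + d"] Suc.prems by simp
    ultimately show ?case by simp
  qed
  have "comp A s t"
  proof (rule compI)
    show "s \<le> t" using sq t1 by simp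
    show "x \<in> A" if "s \<le> x" "x \<le> t" for x
    proof (cases "x \<le> q")
      case True then show ?thesis using P that by auto
    next
      case False
      then have "q + (x - q) \<le> t" using that by simp
      then have "q + (x - q) \<in> A" by (rule t3)
      then show ?thesis using False by simp
    qed
    show "\<And>x. Suc x = s \<Longrightarrow> x \<notin> A" using sm by blast
    show "Suc t \<notin> A" using t1 by simp
  qed
  then show ?thesis using sq t1 by blast
qed

lemma comp_unique:
  assumes "comp A s t" "comp A s' t'" "s \<le> x" "x \<le> t" "s' \<le> x" "x \<le> t'"
  shows "s = s' \<and> t = t'"
proof -
  note c1 = compD[OF assms(1)] and c2 = compD[OF assms(2)]
  have "s = s'"
  proof (rule ccontr)
    assume "s \<noteq> s'"
    then consider "s < s'" | "s' < s" by linarith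
    then show False
    proof cases
      case 1
      then have "Suc (s' - 1) = s'" by simp
      moreover have "s' - 1 \<in> A" using c1(2)[of "s' - 1"] 1 assms by simp
      ultimately show False using c2(3) by blast
    next
      case 2
      then have "Suc (s - 1) = s" by simp
      moreover have "s - 1 \<in> A" using c2(2)[of "s - 1"] 2 assms by simp
      ultimately show False using c1(3) by blast
    qed
  qed
  moreover have "t = t'"
  proof (rule ccontr)
    assume "t \<noteq> t'"
    then consider "t < t'" | "t' < t" by linarith
    then show False
    proof cases
      case 1
      then have "Suc t \<in> A" using c2(2)[of "Suc t"] assms by simp
      then show False using c1(4) by blast
    next
      case 2
      then have "Suc t' \<in> A" using c1(2)[of "Suc t'"] assms by simp
      then show False using c2(4) by blast
    qed
  qed
  ultimately show ?thesis by simp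
qed

lemma comp_nolad:
  assumes "comp A s t" "s \<le> a" "a \<le> t" "b \<in> A" "\<not> (s \<le> b \<and> b \<le> t)"
  shows "\<not> lad a b"
proof
  assume "lad a b"
  then consider "b = Suc a" | "a = Suc b" unfolding lad_def by blast
  then show False
  proof cases
    case 1 then have "b = Suc t" using assms by linarith
    then show ?thesis using compD(4)[OF assms(1)] assms(4) by simp
  next
    case 2 then have "Suc b = s" using assms by linarith
    then show ?thesis using compD(3)[OF assms(1)] assms(4) by blast
  qed
qed

definition liso :: "(nat \<Rightarrow> nat) \<Rightarrow> (nat \<Rightarrow> nat \<Rightarrow> bool) \<Rightarrow> nat set \<Rightarrow> nat set \<Rightarrow> bool" where
 "liso f R S A \<longleftrightarrow> bij_betw f S A \<and> (\<forall>x\<in>S. \<forall>y\<in>S. R x y \<longleftrightarrow> lad (f x) (f y))"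

lemma reloc:
  fixes rv :: bool
  assumes fin: "finite A" and c: "comp A s t" and M: "\<forall>a\<in>A. Suc a < M"
  defines "r \<equiv> \<lambda>a. if s \<le> a \<and> a \<le> t then M + (if rv then t - a else a - s) else a"
  shows "inj_on r A" "r ` A = (A - {s..t}) \<union> {M..M + (t - s)}"
        "\<forall>a\<in>A. \<forall>b\<in>A. lad a b \<longleftrightarrow> lad (r a) (r b)"
proof -
  note cd = compD[OF c]
  show "inj_on r A"
  proof (rule inj_onI)
    fix a b assume a: "a \<in> A" and b: "b \<in> A" and e: "r a = r b"
    have Ma: "Suc a < M" "Suc b < M" using M a b by auto
    show "a = b"
      using e Ma unfolding r_def by (auto split: if_splits)
  qed
  show "r ` A = (A - {s..t}) \<union> {M..M + (t - s)}"
  proof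
    show "r ` A \<subseteq> (A - {s..t}) \<union> {M..M + (t - s)}"
      unfolding r_def by (auto split: if_splits)
    show "(A - {s..t}) \<union> {M..M + (t - s)} \<subseteq> r ` A"
    proof
      fix y assume y: "y \<in> (A - {s..t}) \<union> {M..M + (t - s)}"
      show "y \<in> r ` A"
      proof (cases "y \<in> {M..M + (t - s)}")
        case True
        define a where "a = (if rv then t - (y - M) else s + (y - M))"
        have "s \<le> a" "a \<le> t" using True cd(1) unfolding a_def by auto
        moreover have "r a = y" using True cd(1) \<open>s \<le> a\<close> \<open>a \<le> t\<close> unfolding r_def a_def by auto
        moreover have "a \<in> A" using cd(2) calculation by blast
        ultimately show ?thesis by blast
      next
        case False
        then have "y \<in> A" "\<not> (s \<le> y \<and> y \<le> t)" using y by auto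
        then show ?thesis unfolding r_def by force
      qed
    qed
  qed
  show "\<forall>a\<in>A. \<forall>b\<in>A. lad a b \<longleftrightarrow> lad (r a) (r b)"
  proof (intro ballI)
    fix a b assume a: "a \<in> A" and b: "b \<in> A"
    have Ma: "Suc a < M" "Suc b < M" using M a b by auto
    consider "s \<le> a \<and> a \<le> t" "s \<le> b \<and> b \<le> t" | "s \<le> a \<and> a \<le> t" "\<not> (s \<le> b \<and> b \<le> t)"
      | "\<not> (s \<le> a \<and> a \<le> t)" "s \<le> b \<and> b \<le> t" | "\<not> (s \<le> a \<and> a \<le> t)" "\<not> (s \<le> b \<and> b \<le> t)"
      by blast
    then show "lad a b \<longleftrightarrow> lad (r a) (r b)"
    proof cases
      case 1 then show ?thesis unfolding r_def lad_def by auto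
    next
      case 2
      then have "\<not> lad a b" using comp_nolad[OF c _ _ b] by blast
      moreover have "\<not> lad (r a) (r b)" using 2 Ma unfolding r_def lad_def by auto
      ultimately show ?thesis by blast
    next
      case 3
      then have "\<not> lad b a" using comp_nolad[OF c _ _ a] by blast
      moreover have "\<not> lad (r a) (r b)" using 3 Ma unfolding r_def lad_def by auto
      ultimately show ?thesis using lad_sym by blast
    next
      case 4 then have "r a = a" "r b = b" unfolding r_def by auto
      then show ?thesis by simp
    qed
  qed
qed



definition hascyc :: "(nat \<Rightarrow> nat \<Rightarrow> bool) \<Rightarrow> nat set \<Rightarrow> bool" where
 "hascyc R S \<longleftrightarrow> (\<exists>k c. 3 \<le> k \<and> inj_on c {0..<k} \<and> c ` {0..<k} \<subseteq> S \<and> (\<forall>i<k. R (c i) (c (Suc i mod k))))"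

lemma liso_add:
  assumes l: "liso f R S A" and v: "v \<notin> S" and w: "w \<notin> A"
    and N: "\<forall>y\<in>S. R v y \<longleftrightarrow> lad w (f y)" and sym: "\<forall>x y. R x y = R y x" and irr: "\<not> R v v"
  shows "liso (f(v:=w)) R (insert v S) (insert w A)"
proof -
  have b: "bij_betw f S A" and a: "\<forall>x\<in>S. \<forall>y\<in>S. R x y \<longleftrightarrow> lad (f x) (f y)" using l unfolding liso_def by auto
  have fS: "\<And>x. x \<in> S \<Longrightarrow> (f(v:=w)) x = f x" using v by auto
  have b2: "bij_betw f S A" using b .
  have "bij_betw (f(v:=w)) S A" using bij_betw_cong[of S f "f(v:=w)" A] fS b by simp
  then have "bij_betw (f(v:=w)) (S \<union> {v}) (A \<union> {(f(v:=w)) v})"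
    using v w by (intro notIn_Un_bij_betw) auto
  then have bb: "bij_betw (f(v:=w)) (insert v S) (insert w A)" by simp
  have "R x y \<longleftrightarrow> lad ((f(v:=w)) x) ((f(v:=w)) y)" if x: "x \<in> insert v S" and y: "y \<in> insert v S" for x y
  proof (cases "x = v")
    case True
    show ?thesis
    proof (cases "y = v")
      case True then show ?thesis using \<open>x = v\<close> irr unfolding lad_def by simp
    next
      case False
      then have "y \<in> S" using y by simp
      then show ?thesis using N \<open>x = v\<close> fS by simp
    qed
  next
    case False
    then have xS: "x \<in> S" using x by simp
    show ?thesis
    proof (cases "y = v")
      case True
      have "R x y = R y x" using sym by blast
      also have "\<dots> = lad w (f x)" using N xS \<open>y = v\<close> by simp
      also have "\<dots> = lad (f x) w" by (rule lad_sym)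
      finally show ?thesis using fS[OF xS] \<open>y = v\<close> by simp
    next
      case False
      then have "y \<in> S" using y by simp
      then show ?thesis using a xS fS by simp
    qed
  qed
  then show ?thesis using bb unfolding liso_def by blast
qed

lemma liso_reloc:
  assumes l: "liso f R S A" and inj: "inj_on r A" and ad: "\<forall>a\<in>A. \<forall>b\<in>A. lad a b \<longleftrightarrow> lad (r a) (r b)"
  shows "liso (r \<circ> f) R S (r ` A)"
proof -
  have b: "bij_betw f S A" and a: "\<forall>x\<in>S. \<forall>y\<in>S. R x y \<longleftrightarrow> lad (f x) (f y)" using l unfolding liso_def by auto
  have "bij_betw r A (r ` A)" using inj by (simp add: bij_betw_imageI)
  then have bb: "bij_betw (r \<circ> f) S (r ` A)" using b bij_betw_trans by blast
  have "R x y \<longleftrightarrow> lad ((r \<circ> f) x) ((r \<circ> f) y)" if "x \<in> S" "y \<in> S" for x y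
  proof -
    have "f x \<in> A" "f y \<in> A" using b that by (meson bij_betwE)+
    then show ?thesis using a ad that by simp
  qed
  then show ?thesis using bb unfolding liso_def by blast
qed

lemma liso_imp:
  assumes "liso f R S A" "x \<in> S" "y \<in> S"
  shows "f x \<in> A" "R x y \<longleftrightarrow> lad (f x) (f y)"
  using assms unfolding liso_def by (auto dest: bij_betwE)

lemma liso_inj:
  assumes "liso f R S A" "x \<in> S" "y \<in> S" "f x = f y" shows "x = y"
  using assms unfolding liso_def bij_betw_def inj_on_def by blast

lemma liso_surj:
  assumes "liso f R S A" "a \<in> A" obtains x where "x \<in> S" "f x = a"
  using assms unfolding liso_def bij_betw_def by blast

lemma liso_endpoint:
  assumes l: "liso f R S A" and p: "p \<in> S" and fin: "finite S" and d: "card {y\<in>S. R p y} \<le> 1"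
    and c: "comp A s t" and q: "s \<le> f p" "f p \<le> t"
  shows "f p = s \<or> f p = t"
proof (rule ccontr)
  assume "\<not> ?thesis"
  then have lt: "s < f p" "f p < t" using q by auto
  have "Suc (f p) \<in> A" "f p - 1 \<in> A" using compD(2)[OF c] lt by auto
  then obtain y1 y2 where y: "y1 \<in> S" "f y1 = Suc (f p)" "y2 \<in> S" "f y2 = f p - 1"
    using liso_surj[OF l] by metis
  have "R p y1" "R p y2" using liso_imp(2)[OF l p] y lt unfolding lad_def by auto
  moreover have "y1 \<noteq> y2" using y lt by auto
  ultimately have "{y1, y2} \<subseteq> {y\<in>S. R p y}" using y by auto
  then have "card {y1, y2} \<le> card {y\<in>S. R p y}" using fin by (intro card_mono) auto
  then show False using d \<open>y1 \<noteq> y2\<close> by simp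
qed

lemma Mbound: assumes "finite A" shows "\<forall>a\<in>A. Suc a < Suc (Suc (Max (insert 0 A)))"
proof
  fix a assume "a \<in> A"
  then have "a \<le> Max (insert 0 A)" using assms by simp
  then show "Suc a < Suc (Suc (Max (insert 0 A)))" by simp
qed

lemma DL_step0:
  assumes l: "liso f R S A" and finA: "finite A" and v: "v \<notin> S"
    and N: "\<forall>y\<in>S. \<not> R v y" and sym: "\<forall>x y. R x y = R y x" and irr: "\<not> R v v"
  shows "\<exists>f' A'. liso f' R (insert v S) A' \<and> finite A'"
proof -
  define M where "M = Suc (Suc (Max (insert 0 A)))"
  have M: "\<forall>a\<in>A. Suc a < M" unfolding M_def using Mbound[OF finA] .
  have wA: "M \<notin> A" using M by auto
  have "\<forall>y\<in>S. R v y \<longleftrightarrow> lad M (f y)"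
  proof
    fix y assume y: "y \<in> S"
    have "f y \<in> A" using liso_imp(1)[OF l y y] .
    then have "Suc (f y) < M" using M by blast
    then show "R v y \<longleftrightarrow> lad M (f y)" using N y unfolding lad_def by auto
  qed
  from liso_add[OF l v wA this sym irr] have "liso (f(v := M)) R (insert v S) (insert M A)" .
  moreover have "finite (insert M A)" using finA by simp
  ultimately show ?thesis by blast
qed

lemma DL_step1:
  assumes l: "liso f R S A" and finA: "finite A" and finS: "finite S" and v: "v \<notin> S" and p: "p \<in> S"
    and N: "\<forall>y\<in>S. R v y \<longleftrightarrow> y = p" and dp: "card {y\<in>S. R p y} \<le> 1"
    and sym: "\<forall>x y. R x y = R y x" and irr: "\<not> R v v"
  shows "\<exists>f' A'. liso f' R (insert v S) A' \<and> finite A'"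
proof -
  define M where "M = Suc (Suc (Max (insert 0 A)))"
  have M: "\<forall>a\<in>A. Suc a < M" unfolding M_def using Mbound[OF finA] .
  have qA: "f p \<in> A" using liso_imp(1)[OF l p p] .
  obtain s t where c: "comp A s t" "s \<le> f p" "f p \<le> t" using comp_exists[OF finA qA] by blast
  have e: "f p = s \<or> f p = t" using liso_endpoint[OF l p finS dp c] .
  define rv where "rv = (f p \<noteq> t)"
  define r where "r = (\<lambda>a. if s \<le> a \<and> a \<le> t then M + (if rv then t - a else a - s) else a)"
  have R1: "inj_on r A" using reloc(1)[OF finA c(1) M, of rv] unfolding r_def .
  have R2: "r ` A = (A - {s..t}) \<union> {M..M + (t - s)}" using reloc(2)[OF finA c(1) M, of rv] unfolding r_def .
  have R3: "\<forall>a\<in>A. \<forall>b\<in>A. lad a b \<longleftrightarrow> lad (r a) (r b)" using reloc(3)[OF finA c(1) M, of rv] unfolding r_def .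
  have l1: "liso (r \<circ> f) R S (r ` A)" using liso_reloc[OF l R1 R3] .
  have bnd: "x \<le> M + (t - s)" if "x \<in> r ` A" for x
  proof -
    have "x \<in> A - {s..t} \<or> x \<in> {M..M + (t - s)}" using that R2 by blast
    then show ?thesis
    proof
      assume "x \<in> A - {s..t}" then have "Suc x < M" using M by blast
      then show ?thesis by simp
    qed simp
  qed
  define w where "w = M + (t - s) + 1"
  have rq: "r (f p) = M + (t - s)" using e c unfolding r_def rv_def by auto
  have wA: "w \<notin> r ` A" using bnd unfolding w_def by fastforce
  have "\<forall>y\<in>S. R v y \<longleftrightarrow> lad w ((r \<circ> f) y)"
  proof
    fix y assume y: "y \<in> S"
    show "R v y \<longleftrightarrow> lad w ((r \<circ> f) y)"
    proof (cases "y = p")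
      case True then show ?thesis using N p rq unfolding w_def lad_def by simp
    next
      case False
      have ny: "\<not> R v y" using N y False by simp
      have fy: "(r \<circ> f) y \<in> r ` A" using liso_imp(1)[OF l1 y y] .
      have "(r \<circ> f) y \<noteq> (r \<circ> f) p" using liso_inj[OF l1 y p] False by blast
      then have "(r \<circ> f) y \<noteq> M + (t - s)" using rq by simp
      moreover have "(r \<circ> f) y \<le> M + (t - s)" using bnd[OF fy] .
      ultimately have "\<not> lad w ((r \<circ> f) y)" unfolding lad_def w_def by auto
      then show ?thesis using ny by simp
    qed
  qed
  from liso_add[OF l1 v wA this sym irr] have "liso ((r \<circ> f)(v := w)) R (insert v S) (insert w (r ` A))" .
  moreover have "finite (insert w (r ` A))" using finA by simp
  ultimately show ?thesis by blast
qed


lemma liso_cycle: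
  assumes l: "liso f R S A" and v: "v \<notin> S" and c: "comp A s t" and st: "s < t"
    and ps: "ps \<in> S" "f ps = s" "R v ps" and pt: "pt \<in> S" "f pt = t" "R v pt"
    and sym: "\<forall>x y. R x y = R y x"
  shows "hascyc R (insert v S)"
proof -
  have b: "bij_betw f S A" using l unfolding liso_def by blast
  have fS: "f ` S = A" using b unfolding bij_betw_def by blast
  define g where "g = inv_into S f"
  have gS: "g a \<in> S" if "a \<in> A" for a using that fS unfolding g_def by (metis inv_into_into)
  have fg: "f (g a) = a" if "a \<in> A" for a using that fS unfolding g_def by (metis f_inv_into_f)
  have inA: "x \<in> A" if "s \<le> x" "x \<le> t" for x using compD(2)[OF c] that .
  define k where "k = t - s + 2"
  define cc where "cc = (\<lambda>i. if i = 0 then v else g (s + i - 1))"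
  have inA': "s + i - 1 \<in> A" if "0 < i" "i < k" for i
  proof -
    have "s \<le> s + i - 1" "s + i - 1 \<le> t" using that st unfolding k_def by arith+
    then show ?thesis by (rule inA)
  qed
  have ccS: "cc i \<in> S" if "i \<noteq> 0" "i < k" for i using gS[OF inA'[of i]] that unfolding cc_def by simp
  have fcc: "f (cc i) = s + i - 1" if "i \<noteq> 0" "i < k" for i using fg[OF inA'[of i]] that unfolding cc_def by simp
  have k3: "3 \<le> k" using st unfolding k_def by simp
  have inj: "inj_on cc {0..<k}"
  proof (rule inj_onI)
    fix i j assume i: "i \<in> {0..<k}" and j: "j \<in> {0..<k}" and e: "cc i = cc j"
    show "i = j"
    proof (cases "i = 0")
      case True
      show ?thesis
      proof (rule ccontr)
        assume "i \<noteq> j"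
        then have "j \<noteq> 0" using True by simp
        then have "cc j \<in> S" using j ccS by simp
        then show False using e True v unfolding cc_def by simp
      qed
    next
      case False
      show ?thesis
      proof (cases "j = 0")
        case True
        then have "cc i \<in> S" using i ccS False by simp
        then show ?thesis using e True v unfolding cc_def by simp
      next
        case False
        have "f (cc i) = s + i - 1" using fcc \<open>i \<noteq> 0\<close> i by simp
        moreover have "f (cc j) = s + j - 1" using fcc False j by simp
        ultimately show ?thesis using e \<open>i \<noteq> 0\<close> False by simp
      qed
    qed
  qed
  have img: "cc ` {0..<k} \<subseteq> insert v S"
  proof
    fix x assume "x \<in> cc ` {0..<k}"
    then obtain i where i: "i < k" "x = cc i" by auto
    show "x \<in> insert v S"
    proof (cases "i = 0")
      case True then show ?thesis using i unfolding cc_def by simp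
    next
      case False then show ?thesis using i ccS by simp
    qed
  qed
  have gs: "g s = ps"
  proof -
    have "g s \<in> S" "f (g s) = s" using gS fg inA st by auto
    then show ?thesis using liso_inj[OF l _ ps(1)] ps(2) by metis
  qed
  have gt: "g t = pt"
  proof -
    have "g t \<in> S" "f (g t) = t" using gS fg inA st by auto
    then show ?thesis using liso_inj[OF l _ pt(1)] pt(2) by metis
  qed
  have adj: "R (cc i) (cc (Suc i mod k))" if i: "i < k" for i
  proof (cases "Suc i < k")
    case True
    then have m: "Suc i mod k = Suc i" by simp
    show ?thesis
    proof (cases "i = 0")
      case True
      then show ?thesis using m ps(3) gs unfolding cc_def by simp
    next
      case False
      have a1: "s + i - 1 \<in> A" "s + i \<in> A" using inA \<open>Suc i < k\<close> False unfolding k_def by auto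
      have "R (g (s + i - 1)) (g (s + i)) \<longleftrightarrow> lad (f (g (s + i - 1))) (f (g (s + i)))"
        using liso_imp(2)[OF l gS[OF a1(1)] gS[OF a1(2)]] .
      also have "\<dots>" using fg[OF a1(1)] fg[OF a1(2)] False unfolding lad_def by simp
      finally show ?thesis using m False unfolding cc_def by simp
    qed
  next
    case False
    then have ik: "Suc i = k" using i by simp
    then have m: "Suc i mod k = 0" by simp
    have "i \<noteq> 0" using ik k3 by simp
    have "s + i - 1 = t" using ik unfolding k_def using st by simp
    then have "cc i = pt" using gt \<open>i \<noteq> 0\<close> unfolding cc_def by simp
    then show ?thesis using m pt(3) sym unfolding cc_def by simp
  qed
  show ?thesis unfolding hascyc_def using k3 inj img adj by blast
qed

lemma DL_step2:
  assumes l: "liso f R S A" and finA: "finite A" and finS: "finite S" and v: "v \<notin> S"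
    and p1: "p1 \<in> S" and p2: "p2 \<in> S" and ne: "p1 \<noteq> p2"
    and N: "\<forall>y\<in>S. R v y \<longleftrightarrow> y = p1 \<or> y = p2" and d1: "card {y\<in>S. R p1 y} \<le> 1"
    and d2: "card {y\<in>S. R p2 y} \<le> 1"
    and sym: "\<forall>x y. R x y = R y x" and irr: "\<not> R v v"
  shows "hascyc R (insert v S) \<or> (\<exists>f' A'. liso f' R (insert v S) A' \<and> finite A')"
proof -
  have q1A: "f p1 \<in> A" using liso_imp(1)[OF l p1 p1] .
  have q2A: "f p2 \<in> A" using liso_imp(1)[OF l p2 p2] .
  obtain s1 t1 where c1: "comp A s1 t1" "s1 \<le> f p1" "f p1 \<le> t1" using comp_exists[OF finA q1A] by blast
  obtain s2 t2 where c2: "comp A s2 t2" "s2 \<le> f p2" "f p2 \<le> t2" using comp_exists[OF finA q2A] by blast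
  have e1: "f p1 = s1 \<or> f p1 = t1" using liso_endpoint[OF l p1 finS d1 c1] .
  have e2: "f p2 = s2 \<or> f p2 = t2" using liso_endpoint[OF l p2 finS d2 c2] .
  have fne: "f p1 \<noteq> f p2" using liso_inj[OF l p1 p2] ne by blast
  have Rv1: "R v p1" and Rv2: "R v p2" using N p1 p2 by auto
  show ?thesis
  proof (cases "s1 = s2 \<and> t1 = t2")
    case True
    then have st: "s1 < t1" using e1 e2 fne c1 c2 by auto
    have "hascyc R (insert v S)"
    proof (cases "f p1 = s1")
      case True
      then have "f p2 = t1" using e2 fne \<open>s1 = s2 \<and> t1 = t2\<close> by auto
      then show ?thesis using liso_cycle[OF l v c1(1) st p1 True Rv1 p2 _ Rv2 sym] by blast
    next
      case False
      then have "f p1 = t1" using e1 by simp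
      moreover have "f p2 = s1" using e2 fne \<open>s1 = s2 \<and> t1 = t2\<close> calculation by auto
      ultimately show ?thesis using liso_cycle[OF l v c1(1) st p2 _ Rv2 p1 _ Rv1 sym] by blast
    qed
    then show ?thesis by blast
  next
    case False
    have disj: "\<not> (s2 \<le> x \<and> x \<le> t2)" if "s1 \<le> x" "x \<le> t1" for x
      using comp_unique[OF c1(1) c2(1) that] False by blast
    define M where "M = Suc (Suc (Max (insert 0 A)))"
    have M: "\<forall>a\<in>A. Suc a < M" unfolding M_def using Mbound[OF finA] .
    define rv where "rv = (f p1 \<noteq> t1)"
    define r where "r = (\<lambda>a. if s1 \<le> a \<and> a \<le> t1 then M + (if rv then t1 - a else a - s1) else a)"
    have R1: "inj_on r A" using reloc(1)[OF finA c1(1) M, of rv] unfolding r_def .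
    have R2: "r ` A = (A - {s1..t1}) \<union> {M..M + (t1 - s1)}" using reloc(2)[OF finA c1(1) M, of rv] unfolding r_def .
    have R3: "\<forall>a\<in>A. \<forall>b\<in>A. lad a b \<longleftrightarrow> lad (r a) (r b)" using reloc(3)[OF finA c1(1) M, of rv] unfolding r_def .
    have l1: "liso (r \<circ> f) R S (r ` A)" using liso_reloc[OF l R1 R3] .
    have rq1: "r (f p1) = M + (t1 - s1)" using e1 c1 unfolding r_def rv_def by auto
    have rq2: "r (f p2) = f p2" using disj c2 unfolding r_def by auto
    have finA1: "finite (r ` A)" using finA by simp
    have t2M: "Suc t2 < M" using M compD(2)[OF c2(1)] compD(1)[OF c2(1)] by blast
    have c2': "comp (r ` A) s2 t2"
    proof (rule compI)
      show "s2 \<le> t2" using compD(1)[OF c2(1)] .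
      show "x \<in> r ` A" if "s2 \<le> x" "x \<le> t2" for x
      proof -
        have "x \<in> A" using compD(2)[OF c2(1)] that .
        moreover have "\<not> (s1 \<le> x \<and> x \<le> t1)"
        proof
          assume "s1 \<le> x \<and> x \<le> t1"
          then show False using disj[of x] that by simp
        qed
        ultimately show ?thesis unfolding R2 by simp
      qed
      show "x \<notin> r ` A" if "Suc x = s2" for x
      proof -
        have "x \<notin> A" using compD(3)[OF c2(1)] that .
        moreover have "x < M" using t2M that compD(1)[OF c2(1)] by simp
        ultimately show ?thesis unfolding R2 by simp
      qed
      show "Suc t2 \<notin> r ` A" using compD(4)[OF c2(1)] t2M unfolding R2 by simp
    qed
    define M2 where "M2 = M + (t1 - s1) + 2"
    have M2: "\<forall>a\<in>r ` A. Suc a < M2"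
    proof
      fix a assume "a \<in> r ` A"
      then have "a \<in> A - {s1..t1} \<or> a \<in> {M..M + (t1 - s1)}" using R2 by blast
      then show "Suc a < M2"
      proof
        assume "a \<in> A - {s1..t1}" then have "Suc a < M" using M by blast
        then show ?thesis unfolding M2_def by simp
      qed (simp add: M2_def)
    qed
    define rv2 where "rv2 = (f p2 \<noteq> s2)"
    define r2 where "r2 = (\<lambda>a. if s2 \<le> a \<and> a \<le> t2 then M2 + (if rv2 then t2 - a else a - s2) else a)"
    have S1: "inj_on r2 (r ` A)" using reloc(1)[OF finA1 c2' M2, of rv2] unfolding r2_def .
    have S2: "r2 ` (r ` A) = (r ` A - {s2..t2}) \<union> {M2..M2 + (t2 - s2)}"
      using reloc(2)[OF finA1 c2' M2, of rv2] unfolding r2_def .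
    have S3: "\<forall>a\<in>r ` A. \<forall>b\<in>r ` A. lad a b \<longleftrightarrow> lad (r2 a) (r2 b)"
      using reloc(3)[OF finA1 c2' M2, of rv2] unfolding r2_def .
    have l2: "liso (r2 \<circ> (r \<circ> f)) R S (r2 ` (r ` A))" using liso_reloc[OF l1 S1 S3] .
    have tM: "t2 < M" using t2M by simp
    have fp1: "(r2 \<circ> (r \<circ> f)) p1 = M + (t1 - s1)" using rq1 tM unfolding r2_def by simp
    have fp2: "(r2 \<circ> (r \<circ> f)) p2 = M2" using rq2 e2 c2 unfolding r2_def rv2_def by auto
    define w where "w = M + (t1 - s1) + 1"
    have wA: "w \<notin> r2 ` (r ` A)"
    proof
      assume "w \<in> r2 ` (r ` A)"
      then have "w \<in> r ` A - {s2..t2} \<or> w \<in> {M2..M2 + (t2 - s2)}" using S2 by blast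
      then show False
      proof
        assume "w \<in> r ` A - {s2..t2}"
        then have "w \<in> A - {s1..t1} \<or> w \<in> {M..M + (t1 - s1)}" using R2 by blast
        then show False
        proof
          assume "w \<in> A - {s1..t1}" then have "Suc w < M" using M by blast
          then show False unfolding w_def by simp
        qed (simp add: w_def)
      qed (simp add: w_def M2_def)
    qed
    have "\<forall>y\<in>S. R v y \<longleftrightarrow> lad w ((r2 \<circ> (r \<circ> f)) y)"
    proof
      fix y assume y: "y \<in> S"
      show "R v y \<longleftrightarrow> lad w ((r2 \<circ> (r \<circ> f)) y)"
      proof (cases "y = p1 \<or> y = p2")
        case True then show ?thesis using N y fp1 fp2 unfolding w_def M2_def lad_def by auto
      next
        case False
        have ny: "\<not> R v y" using N y False by simp
        have "(r2 \<circ> (r \<circ> f)) y \<noteq> (r2 \<circ> (r \<circ> f)) p1" using liso_inj[OF l2 y p1] False by blast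
        moreover have "(r2 \<circ> (r \<circ> f)) y \<noteq> (r2 \<circ> (r \<circ> f)) p2" using liso_inj[OF l2 y p2] False by blast
        ultimately have "\<not> lad w ((r2 \<circ> (r \<circ> f)) y)" using fp1 fp2 unfolding lad_def w_def M2_def by auto
        then show ?thesis using ny by simp
      qed
    qed
    from liso_add[OF l2 v wA this sym irr]
    have "liso ((r2 \<circ> (r \<circ> f))(v := w)) R (insert v S) (insert w (r2 ` (r ` A)))" .
    moreover have "finite (insert w (r2 ` (r ` A)))" using finA by simp
    ultimately show ?thesis by blast
  qed
qed


lemma DL:
  assumes fin: "finite S" and sym: "\<forall>x y. R x y = R y x" and irr: "\<forall>x. \<not> R x x"
  shows "(\<forall>x\<in>S. card {y\<in>S. R x y} \<le> 2) \<longrightarrow> hascyc R S \<or> (\<exists>f A. liso f R S A \<and> finite A)"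
  using fin
proof (induction S rule: finite_induct)
  case empty
  have "liso id R {} {}" unfolding liso_def by simp
  then show ?case by blast
next
  case (insert v S)
  show ?case
  proof
    assume d: "\<forall>x\<in>insert v S. card {y\<in>insert v S. R x y} \<le> 2"
    have dS: "\<forall>x\<in>S. card {y\<in>S. R x y} \<le> 2"
    proof
      fix x assume x: "x \<in> S"
      have "card {y\<in>S. R x y} \<le> card {y\<in>insert v S. R x y}"
        using insert.hyps(1) by (intro card_mono) auto
      moreover have "card {y\<in>insert v S. R x y} \<le> 2" using d x by blast
      ultimately show "card {y\<in>S. R x y} \<le> 2" by linarith
    qed
    from insert.IH dS have IH: "hascyc R S \<or> (\<exists>f A. liso f R S A \<and> finite A)" by blast
    then show "hascyc R (insert v S) \<or> (\<exists>f A. liso f R (insert v S) A \<and> finite A)"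
    proof
      assume "hascyc R S"
      then have "hascyc R (insert v S)" unfolding hascyc_def by blast
      then show ?thesis by blast
    next
      assume "\<exists>f A. liso f R S A \<and> finite A"
      then obtain f A where l: "liso f R S A" and finA: "finite A" by blast
      define Nv where "Nv = {y\<in>S. R v y}"
      have NvE: "{y\<in>insert v S. R v y} = Nv" using irr unfolding Nv_def by auto
      have cN: "card Nv \<le> 2" using d NvE by (metis insertI1)
      have finN: "finite Nv" unfolding Nv_def using insert.hyps(1) by simp
      have irv: "\<not> R v v" using irr by blast
      have dp: "card {y\<in>S. R p y} \<le> 1" if p: "p \<in> Nv" for p
      proof -
        have pS: "p \<in> S" using p unfolding Nv_def by simp
        have "R p v" using p sym unfolding Nv_def by simp
        then have "{y\<in>insert v S. R p y} = insert v {y\<in>S. R p y}" by auto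
        moreover have "v \<notin> {y\<in>S. R p y}" using insert.hyps(2) by simp
        moreover have "finite {y\<in>S. R p y}" using insert.hyps(1) by simp
        ultimately have "card {y\<in>insert v S. R p y} = Suc (card {y\<in>S. R p y})" by simp
        moreover have "card {y\<in>insert v S. R p y} \<le> 2" using d pS by blast
        ultimately show ?thesis by simp
      qed
      consider "card Nv = 0" | "card Nv = 1" | "card Nv = 2" using cN by linarith
      then show ?thesis
      proof cases
        case 1
        then have "Nv = {}" using finN by simp
        then have N: "\<forall>y\<in>S. \<not> R v y" unfolding Nv_def by blast
        show ?thesis using DL_step0[OF l finA insert.hyps(2) N sym irv] by blast
      next
        case 2
        then obtain p where p: "Nv = {p}" by (rule card_1_singletonE)
        then have pS: "p \<in> S" unfolding Nv_def by blast
        have N: "\<forall>y\<in>S. R v y \<longleftrightarrow> y = p" using p unfolding Nv_def by blast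
        have "card {y\<in>S. R p y} \<le> 1" using dp p by blast
        then show ?thesis using DL_step1[OF l finA insert.hyps(1) insert.hyps(2) pS N _ sym irv] by blast
      next
        case 3
        then obtain p1 p2 where p: "Nv = {p1, p2}" and ne: "p1 \<noteq> p2" by (meson card_2_iff)
        then have p1S: "p1 \<in> S" and p2S: "p2 \<in> S" unfolding Nv_def by blast+
        have N: "\<forall>y\<in>S. R v y \<longleftrightarrow> y = p1 \<or> y = p2" using p unfolding Nv_def by blast
        have "card {y\<in>S. R p1 y} \<le> 1" "card {y\<in>S. R p2 y} \<le> 1" using dp p by blast+
        from DL_step2[OF l finA insert.hyps(1) insert.hyps(2) p1S p2S ne N this sym irv]
        show ?thesis .
      qed
    qed
  qed
qed



definition lfg :: "nat set \<Rightarrow> graph" where "lfg A = (A, {{a, Suc a} | a. a \<in> A \<and> Suc a \<in> A})"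
definition ends :: "nat set \<Rightarrow> nat set" where "ends A = {a\<in>A. Suc a \<notin> A}"
definition ed :: "nat set \<Rightarrow> nat set" where "ed A = {a\<in>A. Suc a \<in> A}"
definition mm :: "nat set \<Rightarrow> nat" where "mm A = card A + card (ends A)"

lemma verts_lfg[simp]: "verts (lfg A) = A" by (simp add: lfg_def verts_def)

lemma adj_lfg: "adj (lfg A) x y \<longleftrightarrow> x \<in> A \<and> y \<in> A \<and> lad x y"
proof
  assume "adj (lfg A) x y"
  then obtain a where "{x, y} = {a, Suc a}" "a \<in> A" "Suc a \<in> A"
    unfolding adj_def lfg_def edges_def by auto
  then show "x \<in> A \<and> y \<in> A \<and> lad x y" unfolding lad_def by (auto simp: doubleton_eq_iff)
next
  assume a: "x \<in> A \<and> y \<in> A \<and> lad x y"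
  then consider "y = Suc x" | "x = Suc y" unfolding lad_def by blast
  then show "adj (lfg A) x y"
  proof cases
    case 1 then show ?thesis using a unfolding adj_def lfg_def edges_def by auto
  next
    case 2 then have "{x, y} = {y, Suc y}" by auto
    then show ?thesis using a 2 unfolding adj_def lfg_def edges_def by auto
  qed
qed

lemma wf_lfg: assumes "finite A" shows "wf_graph (lfg A)"
proof -
  have "\<exists>x y. x \<noteq> y \<and> x \<in> A \<and> y \<in> A \<and> e = {x, y}" if ee: "e \<in> {{a, Suc a} | a. a \<in> A \<and> Suc a \<in> A}" for e
  proof -
    obtain a where "e = {a, Suc a}" "a \<in> A" "Suc a \<in> A" using ee by blast
    then show ?thesis by (intro exI[of _ a] exI[of _ "Suc a"]) simp
  qed
  then show ?thesis unfolding wf_graph_def using assms by (simp add: lfg_def verts_def edges_def)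
qed

lemma induced_lfg: assumes "B \<subseteq> A" shows "induced (lfg A) B = lfg B"
proof -
  have "{e \<in> {{a, Suc a} | a. a \<in> A \<and> Suc a \<in> A}. e \<subseteq> B} = {{a, Suc a} | a. a \<in> B \<and> Suc a \<in> B}"
    using assms by auto
  then show ?thesis unfolding induced_def lfg_def edges_def by simp
qed

lemma card_ed_ends: assumes "finite A" shows "card A = card (ed A) + card (ends A)"
proof -
  have "A = ed A \<union> ends A" "ed A \<inter> ends A = {}" unfolding ed_def ends_def by auto
  moreover have "finite (ed A)" "finite (ends A)" using assms unfolding ed_def ends_def by auto
  ultimately show ?thesis by (metis card_Un_disjoint)
qed

lemma lf_colour_bound:
  assumes wfH: "wf_graph H" and P2: "\<forall>S \<subseteq> verts H. 2 * card S \<le> N + card {e \<in> edges H. e \<subseteq> S}"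
    and fin: "finite B" and phi: "full_hom \<phi> (lfg B) H" and pd: "pdet (lfg B)"
  shows "mm B \<le> N"
proof -
  have inj: "inj_on \<phi> B" using full_hom_inj[OF phi wfH pd] by simp
  have V: "\<phi> ` B \<subseteq> verts H" using phi unfolding full_hom_def by auto
  have A: "\<And>a b. a \<in> B \<Longrightarrow> b \<in> B \<Longrightarrow> lad a b = adj H (\<phi> a) (\<phi> b)"
    using phi unfolding full_hom_def by (simp add: adj_lfg)
  define EB where "EB = (\<lambda>a. {a, Suc a}) ` ed B"
  have c1: "card EB = card (ed B)" unfolding EB_def
    by (rule card_image) (auto simp: inj_on_def doubleton_eq_iff)
  have sub: "EB \<subseteq> Pow B" unfolding EB_def ed_def by auto
  have img: "(\<lambda>e. \<phi> ` e) ` EB = {e \<in> edges H. e \<subseteq> \<phi> ` B}"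
  proof
    show "(\<lambda>e. \<phi> ` e) ` EB \<subseteq> {e \<in> edges H. e \<subseteq> \<phi> ` B}"
    proof
      fix e assume "e \<in> (\<lambda>e. \<phi> ` e) ` EB"
      then obtain a where a: "a \<in> B" "Suc a \<in> B" "e = {\<phi> a, \<phi> (Suc a)}" unfolding EB_def ed_def by auto
      have "adj H (\<phi> a) (\<phi> (Suc a))" using A[OF a(1,2)] unfolding lad_def by simp
      then have "e \<in> edges H" using a(3) unfolding adj_def by simp
      moreover have "e \<subseteq> \<phi> ` B" using a by simp
      ultimately show "e \<in> {e \<in> edges H. e \<subseteq> \<phi> ` B}" by blast
    qed
    show "{e \<in> edges H. e \<subseteq> \<phi> ` B} \<subseteq> (\<lambda>e. \<phi> ` e) ` EB"
    proof
      fix e assume e: "e \<in> {e \<in> edges H. e \<subseteq> \<phi> ` B}"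
      have eH: "e \<in> edges H" "e \<subseteq> \<phi> ` B" using e by auto
      have W: "\<forall>e\<in>edges H. \<exists>x y. x \<noteq> y \<and> x \<in> verts H \<and> y \<in> verts H \<and> e = {x, y}"
        using wfH unfolding wf_graph_def by simp
      obtain x y where xy: "x \<noteq> y" "e = {x, y}" using bspec[OF W eH(1)] by blast
      have "x \<in> \<phi> ` B" "y \<in> \<phi> ` B" using eH(2) xy by auto
      then obtain a b where ab: "a \<in> B" "b \<in> B" "x = \<phi> a" "y = \<phi> b" by blast
      have "adj H (\<phi> a) (\<phi> b)" using e xy ab unfolding adj_def by simp
      then have l: "lad a b" using A[OF ab(1,2)] by simp
      show "e \<in> (\<lambda>e. \<phi> ` e) ` EB"
      proof (cases "b = Suc a")
        case True
        then have "{a, Suc a} \<in> EB" using ab unfolding EB_def ed_def by auto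
        moreover have "e = \<phi> ` {a, Suc a}" using xy ab True by auto
        ultimately show ?thesis by blast
      next
        case False
        then have "a = Suc b" using l unfolding lad_def by simp
        then have "{b, Suc b} \<in> EB" using ab unfolding EB_def ed_def by auto
        moreover have "e = \<phi> ` {b, Suc b}" using xy ab \<open>a = Suc b\<close> by auto
        ultimately show ?thesis by blast
      qed
    qed
  qed
  have injE: "inj_on (\<lambda>e. \<phi> ` e) EB"
    using inj_on_image_Pow[OF inj] sub by (rule inj_on_subset)
  have c2: "card {e \<in> edges H. e \<subseteq> \<phi> ` B} = card (ed B)"
    using card_image[OF injE] img c1 by simp
  have c3: "card (\<phi> ` B) = card B" using card_image[OF inj] .
  have "2 * card B \<le> N + card (ed B)" using P2 V c2 c3 by metis
  then show ?thesis using card_ed_ends[OF fin] unfolding mm_def by linarith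
qed


definition cmp :: "nat set \<Rightarrow> nat \<Rightarrow> nat" where
  "cmp A a = card {b\<in>A. b < a} + card {b\<in>ends A. b < a}"

lemma cmp_suc:
  assumes fin: "finite A" and a: "a \<in> A" "Suc a \<in> A"
  shows "cmp A (Suc a) = Suc (cmp A a)"
proof -
  have "{b\<in>A. b < Suc a} = insert a {b\<in>A. b < a}" using a by auto
  then have "card {b\<in>A. b < Suc a} = Suc (card {b\<in>A. b < a})" using fin by simp
  moreover have "{b\<in>ends A. b < Suc a} = {b\<in>ends A. b < a}" using a unfolding ends_def by (auto simp: less_Suc_eq)
  ultimately show ?thesis unfolding cmp_def by simp
qed

lemma cmp_gap:
  assumes fin: "finite A" and a: "a \<in> A" and b: "b \<in> A" and ab: "a < b" "b \<noteq> Suc a"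
  shows "cmp A a + 2 \<le> cmp A b"
proof -
  have fe: "finite (ends A)" using fin unfolding ends_def by simp
  show ?thesis
  proof (cases "Suc a \<in> A")
    case True
    have "insert a (insert (Suc a) {x\<in>A. x < a}) \<subseteq> {x\<in>A. x < b}" using a True ab by auto
    then have "card (insert a (insert (Suc a) {x\<in>A. x < a})) \<le> card {x\<in>A. x < b}"
      using fin by (intro card_mono) auto
    then have 1: "card {x\<in>A. x < a} + 2 \<le> card {x\<in>A. x < b}" using fin by simp
    have "{x\<in>ends A. x < a} \<subseteq> {x\<in>ends A. x < b}" using ab by auto
    then have 2: "card {x\<in>ends A. x < a} \<le> card {x\<in>ends A. x < b}" using fe by (intro card_mono) auto
    show ?thesis using 1 2 unfolding cmp_def by linarith
  next
    case False
    have "insert a {x\<in>A. x < a} \<subseteq> {x\<in>A. x < b}" using a ab by auto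
    then have "card (insert a {x\<in>A. x < a}) \<le> card {x\<in>A. x < b}" using fin by (intro card_mono) auto
    then have 1: "card {x\<in>A. x < a} + 1 \<le> card {x\<in>A. x < b}" using fin by simp
    have "insert a {x\<in>ends A. x < a} \<subseteq> {x\<in>ends A. x < b}" using a ab False unfolding ends_def by auto
    then have "card (insert a {x\<in>ends A. x < a}) \<le> card {x\<in>ends A. x < b}" using fe by (intro card_mono) auto
    then have 2: "card {x\<in>ends A. x < a} + 1 \<le> card {x\<in>ends A. x < b}" using fe by simp
    show ?thesis using 1 2 unfolding cmp_def by linarith
  qed
qed

lemma cmp_bound:
  assumes fin: "finite A" and a: "a \<in> A"
  shows "cmp A a + 2 \<le> mm A"
proof -
  have fe: "finite (ends A)" using fin unfolding ends_def by simp
  have ne: "A \<noteq> {}" using a by auto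
  define m where "m = Max A"
  have mA: "m \<in> A" unfolding m_def using fin ne by simp
  have "Suc m \<notin> A"
  proof
    assume "Suc m \<in> A" then have "Suc m \<le> m" unfolding m_def using fin by simp
    then show False by simp
  qed
  then have me: "m \<in> ends A" unfolding ends_def using mA by simp
  have am: "a \<le> m" unfolding m_def using fin a by simp
  have "{b\<in>A. b < a} \<subseteq> A - {a}" by auto
  then have "card {b\<in>A. b < a} \<le> card (A - {a})" using fin by (intro card_mono) auto
  moreover have "card (A - {a}) = card A - 1" using a fin by (simp add: card_Diff_singleton)
  moreover have "card A \<ge> 1" using a fin by (metis One_nat_def Suc_leI card_gt_0_iff empty_iff)
  ultimately have 1: "card {b\<in>A. b < a} + 1 \<le> card A" by linarith
  have "{b\<in>ends A. b < a} \<subseteq> ends A - {m}" using am by auto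
  then have "card {b\<in>ends A. b < a} \<le> card (ends A - {m})" using fe by (intro card_mono) auto
  moreover have "card (ends A - {m}) = card (ends A) - 1" using me fe by (simp add: card_Diff_singleton)
  moreover have "card (ends A) \<ge> 1" using me fe by (metis One_nat_def Suc_leI card_gt_0_iff empty_iff)
  ultimately have 2: "card {b\<in>ends A. b < a} + 1 \<le> card (ends A)" by linarith
  show ?thesis using 1 2 unfolding cmp_def mm_def by linarith
qed

lemma cmp_lad:
  assumes fin: "finite A" and a: "a \<in> A" and b: "b \<in> A"
  shows "lad a b \<longleftrightarrow> lad (cmp A a) (cmp A b)"
proof -
  consider "a < b" | "a = b" | "b < a" by linarith
  then show ?thesis
  proof cases
    case 1
    show ?thesis
    proof (cases "b = Suc a")
      case True then show ?thesis using cmp_suc[OF fin a] b unfolding lad_def by simp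
    next
      case False
      have "cmp A a + 2 \<le> cmp A b" using cmp_gap[OF fin a b 1 False] .
      then show ?thesis using 1 False unfolding lad_def by auto
    qed
  next
    case 2 then show ?thesis unfolding lad_def by simp
  next
    case 3
    show ?thesis
    proof (cases "a = Suc b")
      case True then show ?thesis using cmp_suc[OF fin b] a unfolding lad_def by simp
    next
      case False
      have "cmp A b + 2 \<le> cmp A a" using cmp_gap[OF fin b a 3 False] .
      then show ?thesis using 3 False unfolding lad_def by auto
    qed
  qed
qed

lemma lf_compress:
  assumes fin: "finite A"
    and P3: "\<forall>x y. x + 1 < N \<longrightarrow> y + 1 < N \<longrightarrow> x \<in> verts H \<and> (adj H x y \<longleftrightarrow> lad x y)"
    and m: "mm A \<le> N"
  shows "full_colourable (lfg A) H"
proof -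
  have lt: "cmp A a + 1 < N" if "a \<in> A" for a using cmp_bound[OF fin that] m by linarith
  have "full_hom (cmp A) (lfg A) H"
    unfolding full_hom_def
  proof (intro conjI ballI)
    fix x assume "x \<in> verts (lfg A)"
    then have "cmp A x + 1 < N" using lt by simp
    then show "cmp A x \<in> verts H" using P3 by blast
  next
    fix x y assume x: "x \<in> verts (lfg A)" and y: "y \<in> verts (lfg A)"
    have "adj (lfg A) x y \<longleftrightarrow> lad x y" using x y by (simp add: adj_lfg)
    also have "\<dots> \<longleftrightarrow> lad (cmp A x) (cmp A y)" using cmp_lad[OF fin] x y by simp
    also have "\<dots> \<longleftrightarrow> adj H (cmp A x) (cmp A y)" using P3 lt x y by simp
    finally show "adj (lfg A) x y = adj H (cmp A x) (cmp A y)" .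
  qed
  then show ?thesis unfolding full_colourable_def by blast
qed



lemma pd_helper:
  assumes x: "x \<in> B" and y: "y \<in> B" and xy: "x < y" and nl: "\<not> lad x y"
    and tw: "\<forall>z\<in>B. lad x z = lad y z"
    and iso1: "\<forall>a b. comp B a a \<longrightarrow> comp B b b \<longrightarrow> a = b"
    and no3: "\<forall>s. \<not> comp B s (Suc (Suc s))"
  shows False
proof (cases "Suc x \<in> B")
  case True
  have "lad x (Suc x)" unfolding lad_def by simp
  then have "lad y (Suc x)" using tw True by blast
  then have yv: "y = Suc (Suc x)" using xy nl unfolding lad_def by auto
  have "comp B x (Suc (Suc x))"
  proof (rule compI)
    show "x \<le> Suc (Suc x)" by simp
    show "z \<in> B" if "x \<le> z" "z \<le> Suc (Suc x)" for z
    proof -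
      have "z = x \<or> z = Suc x \<or> z = Suc (Suc x)" using that by auto
      then show ?thesis using x True y yv by auto
    qed
    show "z \<notin> B" if "Suc z = x" for z
    proof
      assume "z \<in> B"
      have "lad x z" using that unfolding lad_def by simp
      then have "lad y z" using tw \<open>z \<in> B\<close> by blast
      then show False using yv that unfolding lad_def by simp
    qed
    show "Suc (Suc (Suc x)) \<notin> B"
    proof
      assume "Suc (Suc (Suc x)) \<in> B"
      moreover have "lad y (Suc (Suc (Suc x)))" using yv unfolding lad_def by simp
      ultimately have "lad x (Suc (Suc (Suc x)))" using tw by blast
      then show False unfolding lad_def by simp
    qed
  qed
  then show False using no3 by blast
next
  case False
  have cx: "comp B x x"
  proof (rule compI)
    show "z \<in> B" if "x \<le> z" "z \<le> x" for z using that x by simp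
    show "z \<notin> B" if "Suc z = x" for z
    proof
      assume "z \<in> B"
      have "lad x z" using that unfolding lad_def by simp
      then have "lad y z" using tw \<open>z \<in> B\<close> by blast
      then show False using xy that unfolding lad_def by simp
    qed
    show "Suc x \<notin> B" using False .
  qed simp
  have cy: "comp B y y"
  proof (rule compI)
    show "z \<in> B" if "y \<le> z" "z \<le> y" for z using that y by simp
    show "z \<notin> B" if "Suc z = y" for z
    proof
      assume "z \<in> B"
      have "lad y z" using that unfolding lad_def by simp
      then have "lad x z" using tw \<open>z \<in> B\<close> by blast
      then have "z = Suc x" using xy that unfolding lad_def by auto
      then show False using False \<open>z \<in> B\<close> by simp
    qed
    show "Suc y \<notin> B"
    proof
      assume "Suc y \<in> B"
      have "lad y (Suc y)" unfolding lad_def by simp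
      then have "lad x (Suc y)" using tw \<open>Suc y \<in> B\<close> by blast
      then show False using xy unfolding lad_def by auto
    qed
  qed simp
  have "x = y" using iso1 cx cy by blast
  then show False using xy by simp
qed

lemma pd_crit:
  assumes iso1: "\<forall>a b. comp B a a \<longrightarrow> comp B b b \<longrightarrow> a = b"
    and no3: "\<forall>s. \<not> comp B s (Suc (Suc s))"
  shows "pdet (lfg B)"
  unfolding pdet_def
proof (intro ballI impI)
  fix x y assume x: "x \<in> verts (lfg B)" and y: "y \<in> verts (lfg B)" and ne: "x \<noteq> y"
    and na: "\<not> adj (lfg B) x y"
  show "\<exists>z\<in>verts (lfg B). adj (lfg B) x z \<noteq> adj (lfg B) y z"
  proof (rule ccontr)
    assume "\<not> ?thesis"
    then have tw0: "\<forall>z\<in>B. adj (lfg B) x z = adj (lfg B) y z" by simp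
    have xB: "x \<in> B" and yB: "y \<in> B" using x y by auto
    have tw: "\<forall>z\<in>B. lad x z = lad y z" using tw0 xB yB by (simp add: adj_lfg)
    have nl: "\<not> lad x y" using na xB yB by (simp add: adj_lfg)
    consider "x < y" | "y < x" using ne by linarith
    then show False
    proof cases
      case 1 show False by (rule pd_helper[OF xB yB 1 nl tw iso1 no3])
    next
      case 2
      have "\<not> lad y x" using nl lad_sym by blast
      moreover have "\<forall>z\<in>B. lad y z = lad x z" using tw by simp
      ultimately show False using pd_helper[OF yB xB 2 _ _ iso1 no3] by blast
    qed
  qed
qed

lemma pd_iso1:
  assumes pd: "pdet (lfg B)" and a: "comp B a a" and b: "comp B b b"
  shows "a = b"
proof (rule ccontr)
  assume ne: "a \<noteq> b"
  have aB: "a \<in> B" and bB: "b \<in> B" using compD(2)[OF a] compD(2)[OF b] by auto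
  have nla: "\<not> lad a z" if "z \<in> B" for z
    using that compD(3)[OF a] compD(4)[OF a] unfolding lad_def by auto
  have nlb: "\<not> lad b z" if "z \<in> B" for z
    using that compD(3)[OF b] compD(4)[OF b] unfolding lad_def by auto
  have "\<not> adj (lfg B) a b" using nla bB by (simp add: adj_lfg)
  then obtain z where "z \<in> B" "adj (lfg B) a z \<noteq> adj (lfg B) b z"
    using pd aB bB ne unfolding pdet_def by auto
  then show False using nla nlb by (simp add: adj_lfg)
qed

lemma pd_no3:
  assumes pd: "pdet (lfg B)" and c: "comp B s (Suc (Suc s))"
  shows False
proof -
  note cd = compD[OF c]
  have sB: "s \<in> B" and s2B: "Suc (Suc s) \<in> B" using cd(2) by auto
  have "\<not> adj (lfg B) s (Suc (Suc s))" by (simp add: adj_lfg lad_def)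
  moreover have P: "\<forall>x\<in>B. \<forall>y\<in>B. x \<noteq> y \<longrightarrow> \<not> adj (lfg B) x y \<longrightarrow> (\<exists>z\<in>B. adj (lfg B) x z \<noteq> adj (lfg B) y z)"
    using pd unfolding pdet_def by simp
  moreover have "s \<noteq> Suc (Suc s)" by simp
  ultimately obtain z where z: "z \<in> B" "adj (lfg B) s z \<noteq> adj (lfg B) (Suc (Suc s)) z"
    using sB s2B by blast
  then have "lad s z \<noteq> lad (Suc (Suc s)) z" using sB s2B by (simp add: adj_lfg)
  then consider "z = Suc s" | "Suc z = s" | "z = Suc (Suc (Suc s))" unfolding lad_def by auto
  then show False
  proof cases
    case 1 then show False using z sB s2B by (simp add: adj_lfg lad_def)
  next
    case 2 then show False using cd(3) z(1) by blast
  next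
    case 3 then show False using cd(4) z(1) by simp
  qed
qed

lemma ends_remove:
  assumes "v \<in> A"
  shows "ends (A - {v}) = (ends A - {v}) \<union> {x. Suc x = v \<and> x \<in> A}"
  using assms unfolding ends_def by auto

lemma mm_remove_mid:
  assumes fin: "finite A" and v: "v \<in> A" "Suc v \<in> A" and u: "u \<in> A" "Suc u = v"
  shows "mm (A - {v}) = mm A"
proof -
  have fe: "finite (ends A)" using fin unfolding ends_def by simp
  have "ends (A - {v}) = insert u (ends A)"
    using ends_remove[OF v(1)] v u unfolding ends_def by auto
  moreover have "u \<notin> ends A" using u v unfolding ends_def by auto
  ultimately have "card (ends (A - {v})) = Suc (card (ends A))" using fe by simp
  moreover have "card (A - {v}) = card A - 1" using v fin by (simp add: card_Diff_singleton)
  moreover have "card A \<ge> 1" using v fin by (metis One_nat_def Suc_leI card_gt_0_iff empty_iff)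
  ultimately show ?thesis unfolding mm_def by linarith
qed

lemma mm_remove_iso:
  assumes fin: "finite A" and c: "comp A p p"
  shows "mm (A - {p}) + 2 = mm A"
proof -
  note cd = compD[OF c]
  have pA: "p \<in> A" using cd(2) by simp
  have fe: "finite (ends A)" using fin unfolding ends_def by simp
  have "ends (A - {p}) = ends A - {p}"
    using ends_remove[OF pA] cd(3) by auto
  moreover have "p \<in> ends A" using pA cd(4) unfolding ends_def by simp
  ultimately have "card (ends (A - {p})) = card (ends A) - 1" using fe by (simp add: card_Diff_singleton)
  moreover have "card (ends A) \<ge> 1" using \<open>p \<in> ends A\<close> fe by (metis One_nat_def Suc_leI card_gt_0_iff empty_iff)
  moreover have "card (A - {p}) = card A - 1" using pA fin by (simp add: card_Diff_singleton)
  moreover have "card A \<ge> 1" using pA fin by (metis One_nat_def Suc_leI card_gt_0_iff empty_iff)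
  ultimately show ?thesis unfolding mm_def by linarith
qed

lemma mm_remove_start:
  assumes fin: "finite A" and s: "s \<in> A" "Suc s \<in> A" and st: "\<forall>x. Suc x = s \<longrightarrow> x \<notin> A"
  shows "mm (A - {s}) + 1 = mm A"
proof -
  have "ends (A - {s}) = ends A"
    using ends_remove[OF s(1)] st s unfolding ends_def by auto
  then have "card (ends (A - {s})) = card (ends A)" by simp
  moreover have "card (A - {s}) = card A - 1" using s fin by (simp add: card_Diff_singleton)
  moreover have "card A \<ge> 1" using s fin by (metis One_nat_def Suc_leI card_gt_0_iff empty_iff)
  ultimately show ?thesis unfolding mm_def by linarith
qed

lemma iso_remove:
  assumes "comp (A - {v}) x x" shows "comp A x x \<or> Suc x = v \<or> x = Suc v"
  using assms unfolding comp_def by auto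

lemma c3_remove:
  assumes "comp (A - {v}) x (Suc (Suc x))" shows "comp A x (Suc (Suc x)) \<or> Suc v = x \<or> v = Suc (Suc (Suc x))"
  using assms unfolding comp_def by auto



lemma LF_main:
  assumes wfH: "wf_graph H"
    and P2: "\<forall>S \<subseteq> verts H. 2 * card S \<le> N + card {e \<in> edges H. e \<subseteq> S}"
    and P3: "\<forall>x y. x + 1 < N \<longrightarrow> y + 1 < N \<longrightarrow> x \<in> verts H \<and> (adj H x y \<longleftrightarrow> lad x y)"
    and fin: "finite A" and ob: "minimal_obstruction H (lfg A)"
  shows "\<forall>s t. comp A s t \<longrightarrow> t - s = 0 \<or> t - s = 1 \<or> t - s = 3 \<or> t - s = 5"
    "\<forall>a b. comp A a a \<longrightarrow> comp A b b \<longrightarrow> a = b"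
    "N + 1 \<le> mm A" "mm A \<le> N + 2"
proof -
  have nc: "\<not> full_colourable (lfg A) H" using ob unfolding minimal_obstruction_def by blast
  have sub: "full_colourable (lfg (A - {v})) H" if "v \<in> A" for v
  proof -
    have "A - {v} \<subset> verts (lfg A)" using that by auto
    then have "full_colourable (induced (lfg A) (A - {v})) H" using ob unfolding minimal_obstruction_def by blast
    then show ?thesis using induced_lfg[of "A - {v}" A] by simp
  qed
  have pd: "pdet (lfg A)" using obstruction_pdet[OF ob wfH] .
  have iso1: "\<forall>a b. comp A a a \<longrightarrow> comp A b b \<longrightarrow> a = b" using pd_iso1[OF pd] by blast
  have no3: "\<forall>s. \<not> comp A s (Suc (Suc s))" using pd_no3[OF pd] by blast
  have low: "N + 1 \<le> mm A"
  proof (rule ccontr)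
    assume "\<not> N + 1 \<le> mm A"
    then have "mm A \<le> N" by simp
    then show False using lf_compress[OF fin P3] nc by blast
  qed
  have rmb: "mm (A - {v}) \<le> N" if v: "v \<in> A" and p: "pdet (lfg (A - {v}))" for v
  proof -
    obtain \<phi> where "full_hom \<phi> (lfg (A - {v})) H" using sub[OF v] unfolding full_colourable_def by blast
    then show ?thesis using lf_colour_bound[OF wfH P2 _ _ p] fin by blast
  qed
  have rmc: False if v: "v \<in> A" "Suc v \<in> A" and u: "u \<in> A" "Suc u = v" and p: "pdet (lfg (A - {v}))" for u v
    using rmb[OF v(1) p] mm_remove_mid[OF fin v u] low by simp
  show sz: "\<forall>s t. comp A s t \<longrightarrow> t - s = 0 \<or> t - s = 1 \<or> t - s = 3 \<or> t - s = 5"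
  proof (intro allI impI)
    fix s t assume c: "comp A s t"
    note cd = compD[OF c]
    show "t - s = 0 \<or> t - s = 1 \<or> t - s = 3 \<or> t - s = 5"
    proof (rule ccontr)
      assume bad: "\<not> ?thesis"
      have ne2: "t \<noteq> Suc (Suc s)" using no3 c by blast
      have big: "s + 4 \<le> t" using bad ne2 cd(1) by arith
      have n6: "t \<noteq> s + 5" using bad by arith
      define v where "v = Suc (Suc s)"
      have vA: "v \<in> A" "Suc v \<in> A" using cd(2) big unfolding v_def by auto
      have uA: "Suc s \<in> A" "Suc (Suc s) = v" using cd(2) big unfolding v_def by auto
      have "pdet (lfg (A - {v}))"
      proof (rule pd_crit)
        show "\<forall>a b. comp (A - {v}) a a \<longrightarrow> comp (A - {v}) b b \<longrightarrow> a = b"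
        proof (intro allI impI)
          fix a b assume a: "comp (A - {v}) a a" and b: "comp (A - {v}) b b"
          have ca: "comp A a a" if "comp (A - {v}) a a" for a
          proof -
            have "comp A a a \<or> Suc a = v \<or> a = Suc v" using iso_remove[OF that] .
            moreover have "Suc a \<noteq> v"
            proof
              assume "Suc a = v"
              then have "a = Suc s" unfolding v_def by simp
              then have "s \<in> A - {v}" using cd(2) big unfolding v_def by auto
              then show False using compD(3)[OF that] \<open>a = Suc s\<close> by blast
            qed
            moreover have "a \<noteq> Suc v"
            proof
              assume "a = Suc v"
              then have "Suc a \<in> A - {v}" using cd(2) big unfolding v_def by auto
              then show False using compD(4)[OF that] by blast
            qed
            ultimately show ?thesis by blast
          qed
          show "a = b" using iso1 ca[OF a] ca[OF b] by blast
        qed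
        show "\<forall>x. \<not> comp (A - {v}) x (Suc (Suc x))"
        proof (intro allI notI)
          fix x assume cx: "comp (A - {v}) x (Suc (Suc x))"
          note cxd = compD[OF cx]
          consider "comp A x (Suc (Suc x))" | "Suc v = x" | "v = Suc (Suc (Suc x))" using c3_remove[OF cx] by blast
          then show False
          proof cases
            case 1 then show False using no3 by blast
          next
            case 2
            show False
            proof (cases "t = s + 4")
              case True
              have "Suc (Suc x) \<in> A - {v}" using cxd(2) by simp
              moreover have "Suc (Suc x) = Suc t" using 2 True unfolding v_def by simp
              ultimately show False using cd(4) by simp
            next
              case False
              then have "s + 6 \<le> t" using big n6 by arith
              then have "Suc (Suc (Suc x)) \<in> A - {v}" using cd(2) 2 unfolding v_def by auto
              then show False using cxd(4) by blast
            qed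
          next
            case 3
            then have "Suc x = s" unfolding v_def by simp
            moreover have "x \<in> A" using cxd(2) by auto
            ultimately show False using cd(3) by blast
          qed
        qed
      qed
      then show False using rmc[OF vA uA] by blast
    qed
  qed
  show "\<forall>a b. comp A a a \<longrightarrow> comp A b b \<longrightarrow> a = b" using iso1 .
  show "N + 1 \<le> mm A" using low .
  show "mm A \<le> N + 2"
  proof (cases "\<exists>p. comp A p p")
    case True
    then obtain p where cp: "comp A p p" by blast
    note cpd = compD[OF cp]
    have pA: "p \<in> A" using cpd(2) by simp
    have "pdet (lfg (A - {p}))"
    proof (rule pd_crit)
      show "\<forall>a b. comp (A - {p}) a a \<longrightarrow> comp (A - {p}) b b \<longrightarrow> a = b"
      proof (intro allI impI)
        fix a b assume a: "comp (A - {p}) a a"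
        have aB: "a \<in> A - {p}" using compD(2)[OF a] by simp
        consider "comp A a a" | "Suc a = p" | "a = Suc p" using iso_remove[OF a] by blast
        then have False
        proof cases
          case 1 then show False using iso1 cp aB by blast
        next
          case 2 then show False using cpd(3) aB by blast
        next
          case 3 then show False using cpd(4) aB by blast
        qed
        then show "a = b" ..
      qed
      show "\<forall>x. \<not> comp (A - {p}) x (Suc (Suc x))"
      proof (intro allI notI)
        fix x assume cx: "comp (A - {p}) x (Suc (Suc x))"
        note cxd = compD[OF cx]
        consider "comp A x (Suc (Suc x))" | "Suc p = x" | "p = Suc (Suc (Suc x))" using c3_remove[OF cx] by blast
        then show False
        proof cases
          case 1 then show False using no3 by blast
        next
          case 2 then show False using cpd(4) cxd(2) by auto
        next
          case 3
          have "Suc (Suc x) \<in> A" using cxd(2) by auto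
          then show False using cpd(3) 3 by blast
        qed
      qed
    qed
    then have "mm (A - {p}) \<le> N" using rmb pA by blast
    then show ?thesis using mm_remove_iso[OF fin cp] by simp
  next
    case False
    have "A \<noteq> {}"
    proof
      assume "A = {}"
      then have "full_hom id (lfg A) H" unfolding full_hom_def by simp
      then show False using nc unfolding full_colourable_def by blast
    qed
    then obtain a where "a \<in> A" by blast
    then obtain s t where c: "comp A s t" using comp_exists[OF fin] by blast
    note cd = compD[OF c]
    have "t \<noteq> s" using False c by blast
    have "t - s = 1"
    proof (rule ccontr)
      assume n1: "t - s \<noteq> 1"
      then have d35: "t = s + 3 \<or> t = s + 5" using sz c \<open>t \<noteq> s\<close> cd(1) by force
      define v where "v = Suc s"
      have vA: "v \<in> A" "Suc v \<in> A" using cd(2) d35 unfolding v_def by auto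
      have uA: "s \<in> A" "Suc s = v" using cd(2) d35 unfolding v_def by auto
      have "pdet (lfg (A - {v}))"
      proof (rule pd_crit)
        have ca: "a = s" if a: "comp (A - {v}) a a" for a
        proof -
          consider "comp A a a" | "Suc a = v" | "a = Suc v" using iso_remove[OF a] by blast
          then show ?thesis
          proof cases
            case 1 then show ?thesis using False by blast
          next
            case 2 then show ?thesis unfolding v_def by simp
          next
            case 3
            then have "Suc a \<in> A - {v}" using cd(2) d35 unfolding v_def by auto
            then show ?thesis using compD(4)[OF a] by blast
          qed
        qed
        show "\<forall>a b. comp (A - {v}) a a \<longrightarrow> comp (A - {v}) b b \<longrightarrow> a = b"
          using ca by blast
        show "\<forall>x. \<not> comp (A - {v}) x (Suc (Suc x))"
        proof (intro allI notI)
          fix x assume cx: "comp (A - {v}) x (Suc (Suc x))"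
          note cxd = compD[OF cx]
          consider "comp A x (Suc (Suc x))" | "Suc v = x" | "v = Suc (Suc (Suc x))" using c3_remove[OF cx] by blast
          then show False
          proof cases
            case 1 then show False using no3 by blast
          next
            case 2
            show False
            proof (cases "t = s + 3")
              case True
              have "Suc (Suc x) \<in> A - {v}" using cxd(2) by simp
              moreover have "Suc (Suc x) = Suc t" using 2 True unfolding v_def by simp
              ultimately show False using cd(4) by simp
            next
              case False
              then have "t = s + 5" using d35 by simp
              then have "Suc (Suc (Suc x)) \<in> A - {v}" using cd(2) 2 unfolding v_def by auto
              then show False using cxd(4) by blast
            qed
          next
            case 3
            then have "Suc (Suc x) = s" unfolding v_def by simp
            moreover have "Suc x \<in> A" using cxd(2) by auto
            ultimately show False using cd(3) by blast
          qed
        qed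
      qed
      then show False using rmc[OF vA uA] by blast
    qed
    then have ts: "t = Suc s" using cd(1) by simp
    have sA: "s \<in> A" "Suc s \<in> A" using cd(2) ts by auto
    have "pdet (lfg (A - {s}))"
    proof (rule pd_crit)
      have ca: "a = Suc s" if a: "comp (A - {s}) a a" for a
      proof -
        consider "comp A a a" | "Suc a = s" | "a = Suc s" using iso_remove[OF a] by blast
        then show ?thesis
        proof cases
          case 1 then show ?thesis using False by blast
        next
          case 2
          have "a \<in> A" using compD(2)[OF a] by simp
          then show ?thesis using cd(3) 2 by blast
        next
          case 3 then show ?thesis .
        qed
      qed
      show "\<forall>a b. comp (A - {s}) a a \<longrightarrow> comp (A - {s}) b b \<longrightarrow> a = b"
        using ca by blast
      show "\<forall>x. \<not> comp (A - {s}) x (Suc (Suc x))"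
      proof (intro allI notI)
        fix x assume cx: "comp (A - {s}) x (Suc (Suc x))"
        note cxd = compD[OF cx]
        consider "comp A x (Suc (Suc x))" | "Suc s = x" | "s = Suc (Suc (Suc x))" using c3_remove[OF cx] by blast
        then show False
        proof cases
          case 1 then show False using no3 by blast
        next
          case 2
          have "Suc x \<in> A" using cxd(2) by auto
          then show False using cd(4) ts 2 by simp
        next
          case 3
          have "Suc (Suc x) \<in> A" using cxd(2) by auto
          then show False using cd(3) 3 by blast
        qed
      qed
    qed
    then have "mm (A - {s}) \<le> N" using rmb sA by blast
    moreover have "mm (A - {s}) + 1 = mm A" using mm_remove_start[OF fin sA] cd(3) by blast
    ultimately show ?thesis by simp
  qed
qed



definition Cp :: "nat set \<Rightarrow> (nat \<times> nat) set" where "Cp A = {(s, t). comp A s t}"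
definition xp :: "nat set \<Rightarrow> nat \<Rightarrow> nat" where "xp A d = card {p \<in> Cp A. snd p - fst p = d}"

lemma Cp_sub: "Cp A \<subseteq> A \<times> A"
  unfolding Cp_def comp_def by auto

lemma finite_Cp: "finite A \<Longrightarrow> finite (Cp A)"
  using Cp_sub finite_subset by blast

lemma comp_remove_Cp:
  assumes c: "comp A s t"
  shows "Cp (A - {s..t}) = Cp A - {(s, t)}"
proof
  note cd = compD[OF c]
  show "Cp (A - {s..t}) \<subseteq> Cp A - {(s, t)}"
  proof
    fix p assume "p \<in> Cp (A - {s..t})"
    then obtain s' t' where p: "p = (s', t')" and c': "comp (A - {s..t}) s' t'" unfolding Cp_def by auto
    note cd' = compD[OF c']
    have "comp A s' t'"
    proof (rule compI)
      show "s' \<le> t'" using cd'(1) .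
      show "x \<in> A" if "s' \<le> x" "x \<le> t'" for x using cd'(2)[OF that] by simp
      show "x \<notin> A" if "Suc x = s'" for x
      proof
        assume xA: "x \<in> A"
        have "x \<in> {s..t}" using cd'(3)[OF that] xA by blast
        moreover have "s' \<notin> {s..t}" using cd'(2)[of s'] cd'(1) by simp
        ultimately have "s' = Suc t" using that by auto
        then show False using cd(4) cd'(2)[of s'] cd'(1) by simp
      qed
      show "Suc t' \<notin> A"
      proof
        assume "Suc t' \<in> A"
        then have "Suc t' \<in> {s..t}" using cd'(4) by blast
        moreover have "t' \<notin> {s..t}" using cd'(2)[of t'] cd'(1) by simp
        ultimately have "Suc t' = s" by auto
        then show False using cd(3) cd'(2)[of t'] cd'(1) by auto
      qed
    qed
    moreover have "s' \<noteq> s" using cd'(2)[of s'] cd'(1) cd(1) by auto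
    ultimately show "p \<in> Cp A - {(s, t)}" using p unfolding Cp_def by auto
  qed
  show "Cp A - {(s, t)} \<subseteq> Cp (A - {s..t})"
  proof
    fix p assume "p \<in> Cp A - {(s, t)}"
    then obtain s' t' where p: "p = (s', t')" and c': "comp A s' t'" and ne: "(s', t') \<noteq> (s, t)"
      unfolding Cp_def by auto
    note cd' = compD[OF c']
    have disj: "\<not> (s \<le> x \<and> x \<le> t)" if "s' \<le> x" "x \<le> t'" for x
    proof
      assume "s \<le> x \<and> x \<le> t"
      then have "s = s' \<and> t = t'" using comp_unique[OF c c'] that by blast
      then show False using ne by simp
    qed
    have "comp (A - {s..t}) s' t'"
    proof (rule compI)
      show "s' \<le> t'" using cd'(1) .
      show "x \<in> A - {s..t}" if "s' \<le> x" "x \<le> t'" for x using cd'(2)[OF that] disj[OF that] by simp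
      show "x \<notin> A - {s..t}" if "Suc x = s'" for x using cd'(3)[OF that] by simp
      show "Suc t' \<notin> A - {s..t}" using cd'(4) by simp
    qed
    then show "p \<in> Cp (A - {s..t})" using p unfolding Cp_def by simp
  qed
qed

lemma xp_remove:
  assumes fin: "finite A" and c: "comp A s t"
  shows "xp (A - {s..t}) d = (if d = t - s then xp A d - 1 else xp A d)"
proof -
  have "{p \<in> Cp (A - {s..t}). snd p - fst p = d} = {p \<in> Cp A. snd p - fst p = d} - {(s, t)}"
    using comp_remove_Cp[OF c] by auto
  moreover have "finite {p \<in> Cp A. snd p - fst p = d}" using finite_Cp[OF fin] by simp
  moreover have "(s, t) \<in> Cp A" using c unfolding Cp_def by simp
  ultimately show ?thesis unfolding xp_def by (auto simp: card_Diff_singleton)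
qed

lemma mm_remove_comp:
  assumes fin: "finite A" and c: "comp A s t"
  shows "mm (A - {s..t}) + (t - s + 2) = mm A"
proof -
  note cd = compD[OF c]
  have IA: "{s..t} \<subseteq> A" using cd(2) by auto
  have c1: "card (A - {s..t}) = card A - (t - s + 1)"
    using card_Diff_subset[OF _ IA] fin cd(1) by (simp add: Suc_diff_le)
  have c1': "t - s + 1 \<le> card A" using card_mono[OF fin IA] cd(1) by (simp add: Suc_diff_le)
  have "ends (A - {s..t}) = ends A - {t}"
  proof
    show "ends (A - {s..t}) \<subseteq> ends A - {t}"
    proof
      fix x assume x: "x \<in> ends (A - {s..t})"
      then have xA: "x \<in> A" "x \<notin> {s..t}" unfolding ends_def by auto
      have "Suc x \<notin> A"
      proof
        assume sA: "Suc x \<in> A"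
        then have "Suc x \<in> {s..t}" using x unfolding ends_def by auto
        then have "Suc x = s" using xA by auto
        then show False using cd(3) xA by blast
      qed
      then show "x \<in> ends A - {t}" using xA cd(1) unfolding ends_def by auto
    qed
    show "ends A - {t} \<subseteq> ends (A - {s..t})"
    proof
      fix x assume x: "x \<in> ends A - {t}"
      have "x \<notin> {s..t}"
      proof
        assume "x \<in> {s..t}"
        then have "Suc x \<in> A" using x cd(2) by auto
        then show False using x unfolding ends_def by auto
      qed
      then show "x \<in> ends (A - {s..t})" using x unfolding ends_def by auto
    qed
  qed
  moreover have "t \<in> ends A" using cd unfolding ends_def by auto
  moreover have "finite (ends A)" using fin unfolding ends_def by simp
  ultimately have c2: "card (ends (A - {s..t})) = card (ends A) - 1" by (simp add: card_Diff_singleton)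
  have c2': "card (ends A) \<ge> 1" using \<open>t \<in> ends A\<close> \<open>finite (ends A)\<close>
    by (metis One_nat_def Suc_leI card_gt_0_iff empty_iff)
  show ?thesis unfolding mm_def using c1 c1' c2 c2' by linarith
qed

lemma card_remove_comp:
  assumes fin: "finite A" and c: "comp A s t"
  shows "card (A - {s..t}) < card A"
proof -
  have "{s..t} \<subseteq> A" "{s..t} \<noteq> {}" using compD[OF c] by auto
  then have "A - {s..t} \<subset> A" by blast
  then show ?thesis using fin psubset_card_mono by blast
qed


lemma card_ge1: assumes "finite S" "x \<in> S" shows "1 \<le> card S"
proof -
  have "card {x} \<le> card S" using assms by (intro card_mono) auto
  then show ?thesis by simp
qed

lemma Cp_empty: "Cp {} = {}" unfolding Cp_def comp_def by auto

lemma xp_pos: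
  assumes fin: "finite A" and c: "comp A s t" shows "xp A (t - s) \<ge> 1"
proof -
  have "(s, t) \<in> {p \<in> Cp A. snd p - fst p = t - s}" using c unfolding Cp_def by simp
  moreover have "finite {p \<in> Cp A. snd p - fst p = t - s}" using finite_Cp[OF fin] by simp
  ultimately show ?thesis unfolding xp_def by (rule card_ge1[rotated])
qed

lemma xp_pos_ex:
  assumes "xp A d \<ge> 1" obtains s t where "comp A s t" "t - s = d"
proof -
  have "{p \<in> Cp A. snd p - fst p = d} \<noteq> {}" using assms unfolding xp_def by (metis card.empty not_one_le_zero)
  then obtain p where "p \<in> Cp A" "snd p - fst p = d" by blast
  then show ?thesis using that unfolding Cp_def by (cases p) auto
qed

lemma mm_formula:
  assumes "finite A" "\<forall>s t. comp A s t \<longrightarrow> t - s = 0 \<or> t - s = 1 \<or> t - s = 3 \<or> t - s = 5"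
  shows "mm A = 2 * xp A 0 + 3 * xp A 1 + 5 * xp A 3 + 7 * xp A 5"
  using assms
proof (induction "card A" arbitrary: A rule: less_induct)
  case less
  show ?case
  proof (cases "A = {}")
    case True
    then show ?thesis unfolding mm_def xp_def ends_def by (simp add: Cp_empty)
  next
    case False
    then obtain a where "a \<in> A" by blast
    then obtain s t where c: "comp A s t" using comp_exists[OF less.prems(1)] by blast
    define A' where "A' = A - {s..t}"
    have finA': "finite A'" unfolding A'_def using less.prems(1) by simp
    have lt: "card A' < card A" unfolding A'_def using card_remove_comp[OF less.prems(1) c] .
    have h': "\<forall>s t. comp A' s t \<longrightarrow> t - s = 0 \<or> t - s = 1 \<or> t - s = 3 \<or> t - s = 5"
    proof (intro allI impI)
      fix s' t' assume "comp A' s' t'"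
      then have "(s', t') \<in> Cp A" using comp_remove_Cp[OF c] unfolding A'_def Cp_def by blast
      then have "comp A s' t'" unfolding Cp_def by simp
      then show "t' - s' = 0 \<or> t' - s' = 1 \<or> t' - s' = 3 \<or> t' - s' = 5" using less.prems(2) by blast
    qed
    have IH: "mm A' = 2 * xp A' 0 + 3 * xp A' 1 + 5 * xp A' 3 + 7 * xp A' 5"
      using less.hyps[OF lt finA' h'] .
    have X: "\<And>d. xp A' d = (if d = t - s then xp A d - 1 else xp A d)"
      unfolding A'_def using xp_remove[OF less.prems(1) c] .
    have M: "mm A' + (t - s + 2) = mm A" unfolding A'_def using mm_remove_comp[OF less.prems(1) c] .
    have P: "xp A (t - s) \<ge> 1" using xp_pos[OF less.prems(1) c] .
    have "t - s = 0 \<or> t - s = 1 \<or> t - s = 3 \<or> t - s = 5" using less.prems(2) c by blast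
    then show ?thesis
    proof (elim disjE)
      assume d: "t - s = 0"
      show ?thesis using IH X[of 0] X[of 1] X[of 3] X[of 5] M P d by simp
    next
      assume d: "t - s = 1"
      show ?thesis using IH X[of 0] X[of 1] X[of 3] X[of 5] M P d by simp
    next
      assume d: "t - s = 3"
      show ?thesis using IH X[of 0] X[of 1] X[of 3] X[of 5] M P d by simp
    next
      assume d: "t - s = 5"
      show ?thesis using IH X[of 0] X[of 1] X[of 3] X[of 5] M P d by simp
    qed
  qed
qed

lemma isom_lfgI:
  assumes "bij_betw h A B" "\<forall>x\<in>A. \<forall>y\<in>A. lad x y \<longleftrightarrow> lad (h x) (h y)"
  shows "isom h (lfg A) (lfg B)"
proof -
  have "adj (lfg A) x y = adj (lfg B) (h x) (h y)" if "x \<in> A" "y \<in> A" for x y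
  proof -
    have "h x \<in> B" "h y \<in> B" using assms(1) that by (meson bij_betwE)+
    then show ?thesis using assms(2) that by (simp add: adj_lfg)
  qed
  then show ?thesis using assms(1) unfolding isom_def by simp
qed

lemma isom_lfgD:
  assumes "isom h (lfg A) (lfg B)" "x \<in> A" "y \<in> A"
  shows "h x \<in> B" "lad x y \<longleftrightarrow> lad (h x) (h y)"
proof -
  show hx: "h x \<in> B" using assms unfolding isom_def by (auto dest: bij_betwE)
  have hy: "h y \<in> B" using assms unfolding isom_def by (auto dest: bij_betwE)
  have "adj (lfg A) x y = adj (lfg B) (h x) (h y)" using assms unfolding isom_def by simp
  then show "lad x y \<longleftrightarrow> lad (h x) (h y)" using assms hx hy by (simp add: adj_lfg)
qed

lemma iso_by_xp:
  assumes "finite A" "finite B" "\<forall>d. xp A d = xp B d"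
  shows "\<exists>h. isom h (lfg A) (lfg B)"
  using assms
proof (induction "card A" arbitrary: A B rule: less_induct)
  case less
  note finA = less.prems(1) and finB = less.prems(2) and X = less.prems(3)
  show ?case
  proof (cases "A = {}")
    case True
    have "B = {}"
    proof (rule ccontr)
      assume "B \<noteq> {}"
      then obtain b where "b \<in> B" by blast
      then obtain s t where "comp B s t" using comp_exists[OF finB] by blast
      then have "xp B (t - s) \<ge> 1" using xp_pos[OF finB] by blast
      moreover have "xp A (t - s) = 0" using True unfolding xp_def by (simp add: Cp_empty)
      ultimately show False using X by simp
    qed
    then have "isom id (lfg A) (lfg B)" using True by (intro isom_lfgI) auto
    then show ?thesis by blast
  next
    case False
    then obtain a where "a \<in> A" by blast
    then obtain s t where c: "comp A s t" using comp_exists[OF finA] by blast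
    have "xp B (t - s) \<ge> 1" using xp_pos[OF finA c] X by simp
    then obtain s' t' where c': "comp B s' t'" and d: "t' - s' = t - s" by (rule xp_pos_ex)
    note cd = compD[OF c] and cd' = compD[OF c']
    define A' where "A' = A - {s..t}"
    define B' where "B' = B - {s'..t'}"
    have finA': "finite A'" "finite B'" unfolding A'_def B'_def using finA finB by auto
    have lt: "card A' < card A" unfolding A'_def using card_remove_comp[OF finA c] .
    have X': "\<forall>d. xp A' d = xp B' d"
      unfolding A'_def B'_def using xp_remove[OF finA c] xp_remove[OF finB c'] X d by simp
    obtain g where g: "isom g (lfg A') (lfg B')" using less.hyps[OF lt finA' X'] by blast
    define h where "h = (\<lambda>a. if s \<le> a \<and> a \<le> t then s' + (a - s) else g a)"
    have b1: "bij_betw h {s..t} {s'..t'}"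
    proof -
      have "bij_betw (\<lambda>a. s' + (a - s)) {s..t} {s'..t'}"
        unfolding bij_betw_def
      proof
        show "inj_on (\<lambda>a. s' + (a - s)) {s..t}" by (auto simp: inj_on_def)
        show "(\<lambda>a. s' + (a - s)) ` {s..t} = {s'..t'}"
        proof
          show "(\<lambda>a. s' + (a - s)) ` {s..t} \<subseteq> {s'..t'}" using d cd(1) cd'(1) by auto
          show "{s'..t'} \<subseteq> (\<lambda>a. s' + (a - s)) ` {s..t}"
          proof
            fix y assume y: "y \<in> {s'..t'}"
            then have "y = s' + ((s + (y - s')) - s)" "s + (y - s') \<in> {s..t}" using d cd(1) cd'(1) by auto
            then show "y \<in> (\<lambda>a. s' + (a - s)) ` {s..t}" by blast
          qed
        qed
      qed
      moreover have "bij_betw h {s..t} {s'..t'} = bij_betw (\<lambda>a. s' + (a - s)) {s..t} {s'..t'}"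
        by (rule bij_betw_cong) (simp add: h_def)
      ultimately show ?thesis by simp
    qed
    have b2: "bij_betw h A' B'"
    proof -
      have "bij_betw g A' B'" using g unfolding isom_def by simp
      moreover have "bij_betw h A' B' = bij_betw g A' B'"
        by (rule bij_betw_cong) (auto simp: h_def A'_def)
      ultimately show ?thesis by simp
    qed
    have AU: "A = A' \<union> {s..t}" unfolding A'_def using cd(2) by auto
    have BU: "B = B' \<union> {s'..t'}" unfolding B'_def using cd'(2) by auto
    have bb: "bij_betw h A B"
      using bij_betw_combine[OF b2 b1] AU BU unfolding B'_def by auto
    have hA': "h a \<in> B'" if "a \<in> A'" for a using b2 that by (meson bij_betwE)
    have ad: "lad x y \<longleftrightarrow> lad (h x) (h y)" if x: "x \<in> A" and y: "y \<in> A" for x y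
    proof (cases "s \<le> x \<and> x \<le> t")
      case True
      show ?thesis
      proof (cases "s \<le> y \<and> y \<le> t")
        case True
        then show ?thesis using \<open>s \<le> x \<and> x \<le> t\<close> unfolding h_def lad_def by auto
      next
        case False
        have yA': "y \<in> A'" using y False unfolding A'_def by auto
        have "\<not> lad x y" using comp_nolad[OF c _ _ y False] \<open>s \<le> x \<and> x \<le> t\<close> by blast
        moreover have "\<not> lad (h x) (h y)"
        proof -
          have "h x \<in> {s'..t'}" using \<open>s \<le> x \<and> x \<le> t\<close> b1 by (meson atLeastAtMost_iff bij_betwE)
          moreover have "h y \<in> B" "h y \<notin> {s'..t'}" using hA'[OF yA'] unfolding B'_def by auto
          ultimately show ?thesis using comp_nolad[OF c'] by auto
        qed
        ultimately show ?thesis by simp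
      qed
    next
      case False
      have xA': "x \<in> A'" using x False unfolding A'_def by auto
      show ?thesis
      proof (cases "s \<le> y \<and> y \<le> t")
        case True
        have "\<not> lad y x" using comp_nolad[OF c _ _ x False] True by blast
        moreover have "\<not> lad (h y) (h x)"
        proof -
          have "h y \<in> {s'..t'}" using True b1 by (meson atLeastAtMost_iff bij_betwE)
          moreover have "h x \<in> B" "h x \<notin> {s'..t'}" using hA'[OF xA'] unfolding B'_def by auto
          ultimately show ?thesis using comp_nolad[OF c'] by auto
        qed
        ultimately show ?thesis using lad_sym by blast
      next
        case False
        have yA': "y \<in> A'" using y False unfolding A'_def by auto
        have "lad x y \<longleftrightarrow> lad (g x) (g y)" using isom_lfgD(2)[OF g xA' yA'] .
        moreover have "h x = g x" "h y = g y" using xA' yA' unfolding h_def A'_def by auto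
        ultimately show ?thesis by simp
      qed
    qed
    have "isom h (lfg A) (lfg B)" using isom_lfgI[OF bb] ad by blast
    then show ?thesis by blast
  qed
qed



lemma graph_eq:
  assumes w1: "wf_graph G" and w2: "wf_graph G'" and v: "verts G = verts G'"
    and a: "\<And>x y. adj G x y \<longleftrightarrow> adj G' x y"
  shows "G = G'"
proof -
  have "edges G \<subseteq> edges G'" if w: "wf_graph G" and aa: "\<And>x y. adj G x y \<Longrightarrow> adj G' x y" for G G'
  proof
    fix e assume e: "e \<in> edges G"
    have W: "\<forall>e\<in>edges G. \<exists>x y. x \<noteq> y \<and> x \<in> verts G \<and> y \<in> verts G \<and> e = {x, y}"
      using w unfolding wf_graph_def by simp
    obtain x y where "e = {x, y}" using bspec[OF W e] by blast
    then have "adj G x y" using e unfolding adj_def by simp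
    then have "adj G' x y" by (rule aa)
    then show "e \<in> edges G'" using \<open>e = {x, y}\<close> unfolding adj_def by simp
  qed
  then have "edges G = edges G'" using w1 w2 a by (meson subset_antisym)
  then show ?thesis using v unfolding verts_def edges_def by (simp add: prod_eq_iff)
qed

definition succ :: "nat \<Rightarrow> nat \<Rightarrow> nat" where "succ k i = (if Suc i = k then 0 else Suc i)"

lemma suc_mod_succ: "i < k \<Longrightarrow> Suc i mod k = succ k i"
  unfolding succ_def by auto

lemma succ_inj: "i < k \<Longrightarrow> j < k \<Longrightarrow> succ k i = succ k j \<Longrightarrow> i = j"
  unfolding succ_def by (auto split: if_splits)

lemma adj_cycle:
  assumes k: "2 \<le> k"
  shows "adj (cycle_graph k) i j \<longleftrightarrow> i < k \<and> j < k \<and> (j = succ k i \<or> i = succ k j)"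
proof
  assume "adj (cycle_graph k) i j"
  then obtain a where a: "a < k" "{i, j} = {a, Suc a mod k}" unfolding adj_def cycle_graph_def edges_def by auto
  then have m: "Suc a mod k = succ k a" by (simp add: suc_mod_succ)
  have "succ k a < k" using a k unfolding succ_def by auto
  then show "i < k \<and> j < k \<and> (j = succ k i \<or> i = succ k j)" using a m by (auto simp: doubleton_eq_iff)
next
  assume h: "i < k \<and> j < k \<and> (j = succ k i \<or> i = succ k j)"
  then consider "i < k" "j = Suc i mod k" | "j < k" "i = Suc j mod k" using suc_mod_succ by auto
  then show "adj (cycle_graph k) i j"
  proof cases
    case 1 then show ?thesis unfolding adj_def cycle_graph_def edges_def by auto
  next
    case 2 then have "{i, j} = {j, Suc j mod k}" by auto
    then show ?thesis using 2 unfolding adj_def cycle_graph_def edges_def by auto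
  qed
qed

lemma verts_cycle[simp]: "verts (cycle_graph k) = {0..<k}" by (simp add: cycle_graph_def verts_def)

lemma wf_cycle: assumes k: "2 \<le> k" shows "wf_graph (cycle_graph k)"
proof -
  have "\<exists>x y. x \<noteq> y \<and> x \<in> {0..<k} \<and> y \<in> {0..<k} \<and> e = {x, y}" if e: "e \<in> edges (cycle_graph k)" for e
  proof -
    obtain a where a: "a < k" "e = {a, Suc a mod k}" using e unfolding cycle_graph_def edges_def by auto
    have "Suc a mod k \<noteq> a" "Suc a mod k < k" using a k by (auto simp: suc_mod_succ succ_def)
    then show ?thesis using a by (intro exI[of _ a] exI[of _ "Suc a mod k"]) auto
  qed
  then show ?thesis unfolding wf_graph_def by simp
qed

definition cyc1 :: "nat \<Rightarrow> graph" where "cyc1 k = ({0..k}, edges (cycle_graph k))"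

lemma verts_cyc1[simp]: "verts (cyc1 k) = {0..k}" by (simp add: cyc1_def verts_def)
lemma adj_cyc1: "adj (cyc1 k) i j = adj (cycle_graph k) i j" by (simp add: cyc1_def adj_def edges_def)

lemma wf_cyc1: assumes k: "2 \<le> k" shows "wf_graph (cyc1 k)"
proof -
  have W: "\<forall>e\<in>edges (cycle_graph k). \<exists>x y. x \<noteq> y \<and> x \<in> {0..<k} \<and> y \<in> {0..<k} \<and> e = {x, y}"
    using wf_cycle[OF k] unfolding wf_graph_def by simp
  have "\<exists>x y. x \<noteq> y \<and> x \<in> {0..k} \<and> y \<in> {0..k} \<and> e = {x, y}" if e: "e \<in> edges (cyc1 k)" for e
  proof -
    have "e \<in> edges (cycle_graph k)" using e by (simp add: cyc1_def edges_def)
    then obtain x y where "x \<noteq> y" "x \<in> {0..<k}" "y \<in> {0..<k}" "e = {x, y}" using W by blast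
    then show ?thesis by (intro exI[of _ x] exI[of _ y]) auto
  qed
  then show ?thesis unfolding wf_graph_def by simp
qed

lemma pdet_cycle:
  assumes k: "3 \<le> k" "k \<noteq> 4"
  shows "pdet (cycle_graph k)"
  unfolding pdet_def
proof (intro ballI impI)
  fix i j assume i: "i \<in> verts (cycle_graph k)" and j: "j \<in> verts (cycle_graph k)" and ne: "i \<noteq> j"
    and na: "\<not> adj (cycle_graph k) i j"
  have ik: "i < k" and jk: "j < k" using i j by auto
  have k2: "2 \<le> k" using k by simp
  have na': "\<not> (j = succ k i \<or> i = succ k j)" using na ik jk adj_cycle[OF k2] by simp
  define z where "z = succ k i"
  have zk: "z < k" unfolding z_def succ_def using ik k by auto
  show "\<exists>z\<in>verts (cycle_graph k). adj (cycle_graph k) i z \<noteq> adj (cycle_graph k) j z"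
  proof (cases "adj (cycle_graph k) j z")
    case False
    have "adj (cycle_graph k) i z" using adj_cycle[OF k2] ik zk unfolding z_def by simp
    then show ?thesis using False zk by auto
  next
    case True
    then have "z = succ k j \<or> j = succ k z" using adj_cycle[OF k2] by simp
    moreover have "z \<noteq> succ k j" using succ_inj[OF ik jk] ne unfolding z_def by blast
    ultimately have jz: "j = succ k z" by blast
    define z' where "z' = (if i = 0 then k - 1 else i - 1)"
    have z'k: "z' < k" unfolding z'_def using ik k by auto
    have iz': "i = succ k z'" unfolding z'_def succ_def using ik k by auto
    have "\<not> adj (cycle_graph k) j z'"
    proof
      assume "adj (cycle_graph k) j z'"
      then have "z' = succ k j \<or> j = succ k z'" using adj_cycle[OF k2] by simp
      then show False using iz' jz ne ik k unfolding z_def z'_def succ_def by (auto split: if_splits)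
    qed
    moreover have "adj (cycle_graph k) i z'" using adj_cycle[OF k2] ik z'k iz' by simp
    ultimately show ?thesis using z'k by auto
  qed
qed


lemma induced_cycle_lfg:
  assumes k: "3 \<le> k"
  shows "induced (cycle_graph k) {0..<k-1} = lfg {0..<k-1}"
proof (rule graph_eq)
  show "wf_graph (induced (cycle_graph k) {0..<k-1})" using wf_induced[OF wf_cycle] k by auto
  show "wf_graph (lfg {0..<k-1})" by (rule wf_lfg) simp
  show "verts (induced (cycle_graph k) {0..<k-1}) = verts (lfg {0..<k-1})" by simp
  fix x y
  have k2: "2 \<le> k" using k by simp
  show "adj (induced (cycle_graph k) {0..<k-1}) x y \<longleftrightarrow> adj (lfg {0..<k-1}) x y"
    unfolding adj_induced adj_lfg adj_cycle[OF k2] lad_def succ_def by auto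
qed

lemma induced_cyc1_lfg:
  assumes k: "3 \<le> k"
  shows "induced (cyc1 k) ({0..<k-1} \<union> {k}) = lfg ({0..<k-1} \<union> {k})"
proof (rule graph_eq)
  show "wf_graph (induced (cyc1 k) ({0..<k-1} \<union> {k}))" using k by (intro wf_induced[OF wf_cyc1]) auto
  show "wf_graph (lfg ({0..<k-1} \<union> {k}))" by (rule wf_lfg) simp
  show "verts (induced (cyc1 k) ({0..<k-1} \<union> {k})) = verts (lfg ({0..<k-1} \<union> {k}))" by simp
  fix x y
  have k2: "2 \<le> k" using k by simp
  show "adj (induced (cyc1 k) ({0..<k-1} \<union> {k})) x y \<longleftrightarrow> adj (lfg ({0..<k-1} \<union> {k})) x y"
    unfolding adj_induced adj_lfg adj_cyc1 adj_cycle[OF k2] lad_def succ_def by auto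
qed

lemma lf_sub_bound:
  assumes wfH: "wf_graph H" and P2: "\<forall>S \<subseteq> verts H. 2 * card S \<le> N + card {e \<in> edges H. e \<subseteq> S}"
    and ob: "minimal_obstruction H G" and BV: "B \<subset> verts G" and ind: "induced G B = lfg B"
    and fin: "finite B" and pd: "pdet (lfg B)"
  shows "mm B \<le> N"
proof -
  have "full_colourable (induced G B) H" using ob BV unfolding minimal_obstruction_def by blast
  then obtain \<phi> where "full_hom \<phi> (lfg B) H" using ind unfolding full_colourable_def by auto
  then show ?thesis using lf_colour_bound[OF wfH P2 fin _ pd] by blast
qed

lemma cycle_bound:
  assumes wfH: "wf_graph H" and P2: "\<forall>S \<subseteq> verts H. 2 * card S \<le> N + card {e \<in> edges H. e \<subseteq> S}"
    and k: "3 \<le> k" "k \<noteq> 4" and ob: "minimal_obstruction H (cycle_graph k)"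
  shows "k \<le> N"
proof -
  let ?B = "{0..<k-1}"
  have BV: "?B \<subset> verts (cycle_graph k)" using k by auto
  have pd: "pdet (lfg ?B)"
  proof (rule pd_crit)
    show "\<forall>a b. comp ?B a a \<longrightarrow> comp ?B b b \<longrightarrow> a = b"
    proof (intro allI impI)
      fix a b assume a: "comp ?B a a"
      note ad = compD[OF a]
      have "a < k - 1" "Suc a \<notin> ?B" using ad by auto
      then have "Suc a = k - 1" by simp
      then have "Suc (a - 1) = a" "a - 1 \<in> ?B" using k by auto
      then show "a = b" using ad(3) by blast
    qed
    show "\<forall>s. \<not> comp ?B s (Suc (Suc s))"
    proof (intro allI notI)
      fix s assume c: "comp ?B s (Suc (Suc s))"
      note cd = compD[OF c]
      have s2: "Suc (Suc s) < k - 1" "\<not> Suc (Suc (Suc s)) < k - 1" using cd by auto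
      show False
      proof (cases "s = 0")
        case True then show False using s2 k by simp
      next
        case False
        then have "Suc (s - 1) = s" "s - 1 \<in> ?B" using s2 by auto
        then show False using cd(3) by blast
      qed
    qed
  qed
  have "mm ?B \<le> N" using lf_sub_bound[OF wfH P2 ob BV induced_cycle_lfg[OF k(1)] _ pd] by simp
  moreover have "ends ?B = {k - 2}" unfolding ends_def using k by auto
  ultimately show ?thesis unfolding mm_def using k by simp
qed

lemma cyc1_bound:
  assumes wfH: "wf_graph H" and P2: "\<forall>S \<subseteq> verts H. 2 * card S \<le> N + card {e \<in> edges H. e \<subseteq> S}"
    and k: "3 \<le> k" "k \<noteq> 4" and ob: "minimal_obstruction H (cyc1 k)"
  shows "k + 2 \<le> N"
proof -
  let ?B = "{0..<k-1} \<union> {k}"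
  have BV: "?B \<subset> verts (cyc1 k)"
  proof
    show "?B \<subseteq> verts (cyc1 k)" by auto
    have "k - 1 \<in> verts (cyc1 k)" "k - 1 \<notin> ?B" using k by auto
    then show "?B \<noteq> verts (cyc1 k)" by blast
  qed
  have pd: "pdet (lfg ?B)"
  proof (rule pd_crit)
    have ca: "a = k" if a: "comp ?B a a" for a
    proof (rule ccontr)
      assume ne: "a \<noteq> k"
      note ad = compD[OF a]
      have "a < k - 1" "Suc a \<notin> ?B" using ad ne by auto
      then have "Suc a = k - 1" by auto
      then have "Suc (a - 1) = a" "a - 1 \<in> ?B" using k by auto
      then show False using ad(3) by blast
    qed
    show "\<forall>a b. comp ?B a a \<longrightarrow> comp ?B b b \<longrightarrow> a = b" using ca by blast
    show "\<forall>s. \<not> comp ?B s (Suc (Suc s))"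
    proof (intro allI notI)
      fix s assume c: "comp ?B s (Suc (Suc s))"
      note cd = compD[OF c]
      have in3: "s \<in> ?B" "Suc s \<in> ?B" "Suc (Suc s) \<in> ?B" using cd by auto
      then have s2: "Suc (Suc s) < k - 1" using k by auto
      have s3: "Suc (Suc (Suc s)) \<notin> ?B" using cd by simp
      then have "\<not> Suc (Suc (Suc s)) < k - 1" by simp
      show False
      proof (cases "s = 0")
        case True then show False using s2 s3 k by auto
      next
        case False
        then have "Suc (s - 1) = s" "s - 1 \<in> ?B" using s2 by auto
        then show False using cd(3) by blast
      qed
    qed
  qed
  have ind: "induced (cyc1 k) ?B = lfg ?B" using induced_cyc1_lfg[OF k(1)] .
  have "mm ?B \<le> N" using lf_sub_bound[OF wfH P2 ob BV ind _ pd] by simp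
  moreover have "ends ?B = {k - 2, k}" unfolding ends_def using k by auto
  moreover have "card ?B = k" using k by simp
  ultimately show ?thesis unfolding mm_def using k by simp
qed



definition goodH :: "graph \<Rightarrow> nat \<Rightarrow> bool" where
 "goodH H N \<longleftrightarrow> wf_graph H \<and> 2 \<le> N
   \<and> (\<forall>x a b c. adj H x a \<longrightarrow> adj H x b \<longrightarrow> adj H x c \<longrightarrow> a = b \<or> a = c \<or> b = c)
   \<and> (\<forall>S \<subseteq> verts H. 2 * card S \<le> N + card {e \<in> edges H. e \<subseteq> S})
   \<and> (\<forall>x y. x + 1 < N \<longrightarrow> y + 1 < N \<longrightarrow> x \<in> verts H \<and> (adj H x y \<longleftrightarrow> lad x y))
   \<and> (\<forall>k g. 3 \<le> k \<longrightarrow> inj_on g {0..<k} \<longrightarrow> (\<forall>i<k. adj H (g i) (g (succ k i))) \<longrightarrow> g ` {0..<k} = verts H)"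

definition deg2 :: "graph \<Rightarrow> bool" where
 "deg2 G \<longleftrightarrow> (\<forall>x a b c. adj G x a \<longrightarrow> adj G x b \<longrightarrow> adj G x c \<longrightarrow> a = b \<or> a = c \<or> b = c)"

lemma induced_all: assumes "wf_graph G" shows "induced G (verts G) = G"
proof -
  have W: "\<forall>e\<in>edges G. \<exists>x y. x \<noteq> y \<and> x \<in> verts G \<and> y \<in> verts G \<and> e = {x, y}"
    using assms unfolding wf_graph_def by simp
  have "\<forall>e\<in>edges G. e \<subseteq> verts G"
  proof
    fix e assume "e \<in> edges G"
    then obtain x y where "x \<in> verts G" "y \<in> verts G" "e = {x, y}" using W by blast
    then show "e \<subseteq> verts G" by simp
  qed
  then have "{e \<in> edges G. e \<subseteq> verts G} = edges G" by blast
  then show ?thesis unfolding induced_def verts_def edges_def by simp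
qed

lemma sep_hom:
  assumes wfH: "wf_graph H" and phi: "full_hom \<phi> (induced G T) H"
    and u: "u \<in> T" and w: "w \<in> T" and z: "z \<in> T" and d: "adj G u w \<or> adj G u z \<noteq> adj G w z"
  shows "\<phi> u \<noteq> \<phi> w"
proof
  assume "\<phi> u = \<phi> w"
  from full_hom_same[OF phi wfH _ _ this] u w z
  have "\<not> adj (induced G T) u w" "adj (induced G T) u z = adj (induced G T) w z" by auto
  then show False using d u w z by (simp add: adj_induced)
qed

lemma deg3_small:
  assumes gH: "goodH H N" and ob: "minimal_obstruction H G"
    and xa: "adj G x a" and xb: "adj G x b" and xc: "adj G x c" and ab: "a \<noteq> b" and ac: "a \<noteq> c" and bc: "b \<noteq> c"
  shows "card (verts G) \<le> 7"
proof -
  have wfH: "wf_graph H" and H1: "\<forall>x a b c. adj H x a \<longrightarrow> adj H x b \<longrightarrow> adj H x c \<longrightarrow> a = b \<or> a = c \<or> b = c"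
    using gH unfolding goodH_def by auto
  have wfG: "wf_graph G" using ob unfolding minimal_obstruction_def by blast
  have pd: "pdet G" using obstruction_pdet[OF ob wfH] .
  let ?V = "verts G"
  have V: "x \<in> ?V" "a \<in> ?V" "b \<in> ?V" "c \<in> ?V" using wf_adj[OF wfG] xa xb xc by auto
  have ex: "\<exists>z. z \<in> ?V \<and> (adj G u w \<or> adj G u z \<noteq> adj G w z)" if "u \<in> ?V" "w \<in> ?V" "u \<noteq> w" for u w
  proof (cases "adj G u w")
    case True then show ?thesis using that by blast
  next
    case False then show ?thesis using pd that unfolding pdet_def by blast
  qed
  define d where "d = (\<lambda>u w. SOME z. z \<in> ?V \<and> (adj G u w \<or> adj G u z \<noteq> adj G w z))"
  have dP: "d u w \<in> ?V \<and> (adj G u w \<or> adj G u (d u w) \<noteq> adj G w (d u w))"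
    if "u \<in> ?V" "w \<in> ?V" "u \<noteq> w" for u w
    unfolding d_def using someI_ex[OF ex[OF that]] .
  define T where "T = set [x, a, b, c, d a b, d a c, d b c]"
  have TV: "T \<subseteq> ?V" unfolding T_def using V dP ab ac bc by auto
  have cT: "card T \<le> 7" unfolding T_def using card_length[of "[x, a, b, c, d a b, d a c, d b c]"] by simp
  have "T = ?V"
  proof (rule ccontr)
    assume "T \<noteq> ?V"
    then have "T \<subset> ?V" using TV by blast
    then obtain \<phi> where phi: "full_hom \<phi> (induced G T) H"
      using ob unfolding minimal_obstruction_def full_colourable_def by blast
    have inT: "x \<in> T" "a \<in> T" "b \<in> T" "c \<in> T" "d a b \<in> T" "d a c \<in> T" "d b c \<in> T" unfolding T_def by auto
    have n1: "\<phi> a \<noteq> \<phi> b" using sep_hom[OF wfH phi inT(2) inT(3) inT(5)] dP[OF V(2) V(3) ab] by blast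
    have n2: "\<phi> a \<noteq> \<phi> c" using sep_hom[OF wfH phi inT(2) inT(4) inT(6)] dP[OF V(2) V(4) ac] by blast
    have n3: "\<phi> b \<noteq> \<phi> c" using sep_hom[OF wfH phi inT(3) inT(4) inT(7)] dP[OF V(3) V(4) bc] by blast
    have A: "\<And>u w. u \<in> T \<Longrightarrow> w \<in> T \<Longrightarrow> adj G u w = adj H (\<phi> u) (\<phi> w)"
      using phi unfolding full_hom_def by (simp add: adj_induced)
    have "adj H (\<phi> x) (\<phi> a)" "adj H (\<phi> x) (\<phi> b)" "adj H (\<phi> x) (\<phi> c)"
      using A[OF inT(1) inT(2)] A[OF inT(1) inT(3)] A[OF inT(1) inT(4)] xa xb xc by auto
    then show False using H1 n1 n2 n3 by blast
  qed
  then show ?thesis using cT by simp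
qed

lemma three_elems:
  assumes "finite S" "3 \<le> card S" shows "\<exists>a b c. a \<in> S \<and> b \<in> S \<and> c \<in> S \<and> a \<noteq> b \<and> a \<noteq> c \<and> b \<noteq> c"
proof -
  obtain a where a: "a \<in> S" using assms by (metis card.empty ex_in_conv not_numeral_le_zero)
  have "card (S - {a}) \<ge> 2" using assms a by (simp add: card_Diff_singleton)
  then obtain b where b: "b \<in> S - {a}" by (metis card.empty ex_in_conv not_numeral_le_zero)
  have "card (S - {a} - {b}) \<ge> 1" using assms a b \<open>card (S - {a}) \<ge> 2\<close> by (simp add: card_Diff_singleton)
  then obtain c where c: "c \<in> S - {a} - {b}" by (metis card.empty ex_in_conv not_one_le_zero)
  show ?thesis using a b c by blast
qed

lemma lf_case:
  assumes wfG: "wf_graph G" and d2: "deg2 G" and nc: "\<not> hascyc (adj G) (verts G)"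
  shows "\<exists>f A. finite A \<and> isom f G (lfg A)"
proof -
  have fin: "finite (verts G)" using wfG unfolding wf_graph_def by blast
  have sym: "\<forall>x y. adj G x y = adj G y x" using adj_sym by blast
  have irr: "\<forall>x. \<not> adj G x x" using wf_noloop[OF wfG] by blast
  have deg: "\<forall>x\<in>verts G. card {y\<in>verts G. adj G x y} \<le> 2"
  proof
    fix x assume "x \<in> verts G"
    show "card {y\<in>verts G. adj G x y} \<le> 2"
    proof (rule ccontr)
      assume "\<not> ?thesis"
      then have "3 \<le> card {y\<in>verts G. adj G x y}" by simp
      then obtain a b c where "a \<in> {y\<in>verts G. adj G x y}" "b \<in> {y\<in>verts G. adj G x y}"
        "c \<in> {y\<in>verts G. adj G x y}" "a \<noteq> b" "a \<noteq> c" "b \<noteq> c"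
        using three_elems[of "{y\<in>verts G. adj G x y}"] fin by auto
      then show False using d2 unfolding deg2_def by blast
    qed
  qed
  obtain f A where l: "liso f (adj G) (verts G) A" and finA: "finite A"
    using DL[OF fin sym irr] deg nc by blast
  have b: "bij_betw f (verts G) A" using l unfolding liso_def by blast
  have "adj G x y = adj (lfg A) (f x) (f y)" if "x \<in> verts G" "y \<in> verts G" for x y
    using liso_imp[OF l that] liso_imp(1)[OF l that(2) that(2)] by (simp add: adj_lfg)
  then have "isom f G (lfg A)" using b unfolding isom_def by simp
  then show ?thesis using finA by blast
qed



lemma cycle_case:
  assumes gH: "goodH H N" and ob: "minimal_obstruction H G" and d2: "deg2 G"
    and hc: "hascyc (adj G) (verts G)"
  shows "\<exists>k. 3 \<le> k \<and> k \<noteq> 4 \<and> ((\<exists>f. isom f G (cycle_graph k)) \<or> (\<exists>f. isom f G (cyc1 k)))"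
proof -
  have wfH: "wf_graph H" and H4: "\<forall>k g. 3 \<le> k \<longrightarrow> inj_on g {0..<k} \<longrightarrow> (\<forall>i<k. adj H (g i) (g (succ k i))) \<longrightarrow> g ` {0..<k} = verts H"
    using gH unfolding goodH_def by auto
  have wfG: "wf_graph G" using ob unfolding minimal_obstruction_def by blast
  have pd: "pdet G" using obstruction_pdet[OF ob wfH] .
  let ?V = "verts G"
  obtain k c where k3: "3 \<le> k" and inj: "inj_on c {0..<k}" and img: "c ` {0..<k} \<subseteq> ?V"
    and cyc: "\<forall>i<k. adj G (c i) (c (Suc i mod k))" using hc unfolding hascyc_def by blast
  have k2: "2 \<le> k" using k3 by simp
  have cyc': "adj G (c i) (c (succ k i))" if "i < k" for i using cyc that suc_mod_succ by simp
  define pr where "pr = (\<lambda>i. if i = 0 then k - 1 else i - 1)"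
  have prk: "pr i < k" if "i < k" for i using that k3 unfolding pr_def by auto
  have sp: "succ k (pr i) = i" if "i < k" for i using that k3 unfolding pr_def succ_def by auto
  have sk: "succ k i < k" if "i < k" for i using that k3 unfolding succ_def by auto
  have spne: "succ k i \<noteq> pr i" if "i < k" for i using that k3 unfolding pr_def succ_def by auto
  have ci: "c i = c j \<longleftrightarrow> i = j" if "i < k" "j < k" for i j using inj that unfolding inj_on_def by auto
  have prc: "adj G (c i) (c (pr i))" if "i < k" for i
    using cyc'[OF prk[OF that]] sp[OF that] adj_sym by metis
  have nb: "z = c (succ k i) \<or> z = c (pr i)" if i: "i < k" and a: "adj G (c i) z" for i z
  proof -
    have "c (succ k i) \<noteq> c (pr i)" using ci[OF sk[OF i] prk[OF i]] spne[OF i] by simp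
    then show ?thesis using d2 cyc'[OF i] prc[OF i] a unfolding deg2_def by metis
  qed
  have adjT: "adj G (c i) (c j) \<longleftrightarrow> adj (cycle_graph k) i j" if i: "i < k" and j: "j < k" for i j
  proof
    assume "adj G (c i) (c j)"
    then have "c j = c (succ k i) \<or> c j = c (pr i)" using nb[OF i] by blast
    then have "j = succ k i \<or> j = pr i" using ci sk prk i j by blast
    then have "j = succ k i \<or> i = succ k j" using sp[OF i] by auto
    then show "adj (cycle_graph k) i j" using adj_cycle[OF k2] i j by simp
  next
    assume "adj (cycle_graph k) i j"
    then have "j = succ k i \<or> i = succ k j" using adj_cycle[OF k2] by simp
    then show "adj G (c i) (c j)"
    proof
      assume "j = succ k i" then show ?thesis using cyc'[OF i] by simp
    next
      assume "i = succ k j" then show ?thesis using cyc'[OF j] adj_sym by metis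
    qed
  qed
  define T where "T = c ` {0..<k}"
  have closed: "z \<in> T" if i: "i < k" and a: "adj G (c i) z" for i z
    using nb[OF i a] sk[OF i] prk[OF i] unfolding T_def by auto
  have bc: "bij_betw c {0..<k} T" unfolding T_def using inj by (simp add: bij_betw_imageI)
  define e where "e = inv_into {0..<k} c"
  have be: "bij_betw e T {0..<k}" unfolding e_def using bij_betw_inv_into[OF bc] .
  have ec: "e (c i) = i" if "i < k" for i unfolding e_def using inj that by simp
  have Tc: "\<exists>i<k. x = c i" if "x \<in> T" for x using that unfolding T_def by auto
  have k4: "k \<noteq> 4"
  proof
    assume k: "k = 4"
    have s: "succ k 0 = 1" "succ k 1 = 2" "succ k 2 = 3" "succ k 3 = 0" "pr 0 = 3" "pr 2 = 1"
      using k unfolding succ_def pr_def by auto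
    have ne: "c 0 \<noteq> c 2" using ci[of 0 2] k by simp
    have na: "\<not> adj G (c 0) (c 2)" using adjT[of 0 2] adj_cycle[OF k2] s k by simp
    have "adj G (c 0) z = adj G (c 2) z" for z
    proof
      assume "adj G (c 0) z"
      then have "z = c 1 \<or> z = c 3" using nb[of 0 z] s k by simp
      then show "adj G (c 2) z" using adjT adj_cycle[OF k2] s k by auto
    next
      assume "adj G (c 2) z"
      then have "z = c 3 \<or> z = c 1" using nb[of 2 z] s k by simp
      then show "adj G (c 0) z" using adjT adj_cycle[OF k2] s k by auto
    qed
    moreover have "c 0 \<in> ?V" "c 2 \<in> ?V" using img k by auto
    ultimately show False using pd ne na unfolding pdet_def by blast
  qed
  have pdc: "pdet (cycle_graph k)" using pdet_cycle[OF k3 k4] .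
  have sepT: "adj G (c i) (c j) \<or> (\<exists>z<k. adj G (c i) (c z) \<noteq> adj G (c j) (c z))"
    if i: "i < k" and j: "j < k" and ne: "i \<noteq> j" for i j
  proof (cases "adj G (c i) (c j)")
    case True then show ?thesis by simp
  next
    case False
    then have na: "\<not> adj (cycle_graph k) i j" using adjT[OF i j] by simp
    have P: "\<forall>x\<in>{0..<k}. \<forall>y\<in>{0..<k}. x \<noteq> y \<longrightarrow> \<not> adj (cycle_graph k) x y \<longrightarrow>
        (\<exists>z\<in>{0..<k}. adj (cycle_graph k) x z \<noteq> adj (cycle_graph k) y z)"
      using pdc unfolding pdet_def by simp
    have "\<exists>z\<in>{0..<k}. adj (cycle_graph k) i z \<noteq> adj (cycle_graph k) j z"
      using P i j ne na by simp
    then obtain z where z: "z \<in> {0..<k}" "adj (cycle_graph k) i z \<noteq> adj (cycle_graph k) j z" by blast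
    then have zk: "z < k" by simp
    have "adj G (c i) (c z) \<noteq> adj G (c j) (c z)" using z(2) adjT[OF i zk] adjT[OF j zk] by simp
    then show ?thesis using zk by blast
  qed
  show ?thesis
  proof (cases "T = ?V")
    case True
    have "adj G x y = adj (cycle_graph k) (e x) (e y)" if "x \<in> ?V" "y \<in> ?V" for x y
    proof -
      have "x \<in> T" "y \<in> T" using that True by auto
      then obtain i j where "i < k" "j < k" "x = c i" "y = c j" using Tc by blast
      then show ?thesis using adjT ec by simp
    qed
    then have "isom e G (cycle_graph k)" using be True unfolding isom_def by simp
    then show ?thesis using k3 k4 by blast
  next
    case False
    then obtain u where u: "u \<in> ?V" "u \<notin> T" using img unfolding T_def by blast
    define S where "S = ?V - {u}"
    have SV: "S \<subset> ?V" using u unfolding S_def by blast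
    then obtain \<phi> where phi: "full_hom \<phi> (induced G S) H"
      using ob unfolding minimal_obstruction_def full_colourable_def by blast
    have TS: "T \<subseteq> S" using u img unfolding S_def T_def by blast
    have cS: "c i \<in> S" if "i < k" for i
    proof -
      have "c i \<in> T" unfolding T_def using that by simp
      then show ?thesis using TS by blast
    qed
    have A: "\<And>x y. x \<in> S \<Longrightarrow> y \<in> S \<Longrightarrow> adj G x y = adj H (\<phi> x) (\<phi> y)"
      using phi unfolding full_hom_def by (simp add: adj_induced)
    have injp: "inj_on (\<phi> \<circ> c) {0..<k}"
    proof (rule inj_onI)
      fix i j assume i: "i \<in> {0..<k}" and j: "j \<in> {0..<k}" and eq: "(\<phi> \<circ> c) i = (\<phi> \<circ> c) j"
      show "i = j"
      proof (rule ccontr)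
        assume ne: "i \<noteq> j"
        have ik: "i < k" "j < k" using i j by auto
        from sepT[OF ik ne] show False
        proof
          assume "adj G (c i) (c j)"
          then have "\<phi> (c i) \<noteq> \<phi> (c j)" using sep_hom[OF wfH phi cS[OF ik(1)] cS[OF ik(2)] cS[OF ik(1)]] by blast
          then show False using eq by simp
        next
          assume "\<exists>z<k. adj G (c i) (c z) \<noteq> adj G (c j) (c z)"
          then obtain z where "z < k" "adj G (c i) (c z) \<noteq> adj G (c j) (c z)" by blast
          then have "\<phi> (c i) \<noteq> \<phi> (c j)" using sep_hom[OF wfH phi cS[OF ik(1)] cS[OF ik(2)] cS] by blast
          then show False using eq by simp
        qed
      qed
    qed
    have homp: "\<forall>i<k. adj H ((\<phi> \<circ> c) i) ((\<phi> \<circ> c) (succ k i))"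
      using A cS cyc' sk by simp
    have surj: "(\<phi> \<circ> c) ` {0..<k} = verts H" using H4 k3 injp homp by blast
    have VT: "?V = insert u T"
    proof
      show "insert u T \<subseteq> ?V" using u img unfolding T_def by blast
      show "?V \<subseteq> insert u T"
      proof
        fix w assume w: "w \<in> ?V"
        show "w \<in> insert u T"
        proof (rule ccontr)
          assume nw: "w \<notin> insert u T"
          then have wS: "w \<in> S" using w unfolding S_def by blast
          have "\<phi> w \<in> verts H" using phi wS unfolding full_hom_def by simp
          then have "\<phi> w \<in> (\<phi> \<circ> c) ` {0..<k}" using surj by simp
          then obtain i where i: "i < k" "\<phi> w = \<phi> (c i)" by auto
          have "\<forall>z\<in>S. adj (induced G S) (c i) z = adj (induced G S) w z"
            using full_hom_same[OF phi wfH, of "c i" w] cS[OF i(1)] wS i(2) by simp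
          then have "adj (induced G S) (c i) (c (succ k i)) = adj (induced G S) w (c (succ k i))"
            using cS sk i by blast
          then have "adj G w (c (succ k i))" using cyc'[OF i(1)] cS sk i wS by (simp add: adj_induced)
          then have "w \<in> T" using closed[OF sk[OF i(1)]] adj_sym by metis
          then show False using nw by blast
        qed
      qed
    qed
    have uiso: "\<not> adj G u z" for z
    proof
      assume a: "adj G u z"
      then have "z \<in> ?V" "z \<noteq> u" using wf_adj[OF wfG] by auto
      then have "z \<in> T" using VT by blast
      then obtain j where "j < k" "z = c j" using Tc by blast
      then have "u \<in> T" using closed a adj_sym by metis
      then show False using u by blast
    qed
    define f where "f = (\<lambda>v. if v = u then k else e v)"
    have bfT: "bij_betw f T {0..<k}"
    proof -
      have "bij_betw f T {0..<k} = bij_betw e T {0..<k}"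
        by (rule bij_betw_cong) (use u in \<open>auto simp: f_def\<close>)
      then show ?thesis using be by simp
    qed
    have "bij_betw f (T \<union> {u}) ({0..<k} \<union> {f u})"
      using notIn_Un_bij_betw[OF u(2) _ bfT] unfolding f_def by simp
    moreover have "{0..<k} \<union> {f u} = {0..k}" unfolding f_def by auto
    ultimately have bf: "bij_betw f ?V {0..k}" using VT by simp
    have "adj G x y = adj (cyc1 k) (f x) (f y)" if x: "x \<in> ?V" and y: "y \<in> ?V" for x y
    proof (cases "x = u \<or> y = u")
      case True
      have "\<not> adj G x y" using True uiso adj_sym by metis
      moreover have "\<not> adj (cyc1 k) (f x) (f y)" using True adj_cyc1 adj_cycle[OF k2] unfolding f_def by auto
      ultimately show ?thesis by simp
    next
      case False
      then have "x \<in> T" "y \<in> T" using x y VT by auto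
      then obtain i j where "i < k" "j < k" "x = c i" "y = c j" using Tc by blast
      then show ?thesis using adjT ec False adj_cyc1 unfolding f_def by simp
    qed
    then have "isom f G (cyc1 k)" using bf unfolding isom_def by simp
    then show ?thesis using k3 k4 by blast
  qed
qed



lemma count_by_reps:
  assumes fin: "finite SS" and ni: "\<forall>G\<in>SS. \<forall>G'\<in>SS. G \<noteq> G' \<longrightarrow> \<not> graph_iso G G'"
    and finY: "finite Y" and rep: "\<forall>G\<in>SS. \<exists>y\<in>Y. graph_iso G (F y)"
  shows "card SS \<le> card Y"
proof -
  define r where "r = (\<lambda>G. SOME y. y \<in> Y \<and> graph_iso G (F y))"
  have rP: "r G \<in> Y \<and> graph_iso G (F (r G))" if "G \<in> SS" for G
    unfolding r_def using someI_ex rep that by (metis (no_types, lifting))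
  have "inj_on r SS"
  proof (rule inj_onI)
    fix G G' assume G: "G \<in> SS" and G': "G' \<in> SS" and e: "r G = r G'"
    have "graph_iso G (F (r G))" "graph_iso G' (F (r G))" using rP[OF G] rP[OF G'] e by auto
    then have "graph_iso G G'" using graph_iso_sym graph_iso_trans by blast
    then show "G = G'" using ni G G' by blast
  qed
  moreover have "r ` SS \<subseteq> Y" using rP by blast
  ultimately show ?thesis using card_inj_on_le finY by blast
qed

definition Canon :: "graph set" where
  "Canon = (\<lambda>(k, E). ({0..<k}, E)) ` ({..7} \<times> Pow (Pow {0..<7::nat}))"

lemma finite_Canon: "finite Canon" unfolding Canon_def by simp

lemma canon_exists:
  assumes wf: "wf_graph G" and c: "card (verts G) \<le> 7"
  shows "\<exists>X\<in>Canon. graph_iso G X"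
proof -
  have fin: "finite (verts G)" using wf unfolding wf_graph_def by blast
  obtain h where h: "bij_betw h (verts G) {0..<card (verts G)}" using ex_bij_betw_finite_nat[OF fin] by blast
  have inj: "inj_on h (verts G)" using h unfolding bij_betw_def by blast
  define X where "X = ({0..<card (verts G)}, (\<lambda>e. h ` e) ` edges G)"
  have W: "\<forall>e\<in>edges G. \<exists>x y. x \<noteq> y \<and> x \<in> verts G \<and> y \<in> verts G \<and> e = {x, y}"
    using wf unfolding wf_graph_def by simp
  have eV: "e \<subseteq> verts G" if ee: "e \<in> edges G" for e
  proof -
    obtain x y where "x \<in> verts G" "y \<in> verts G" "e = {x, y}" using bspec[OF W ee] by blast
    then show ?thesis by simp
  qed
  have "(\<lambda>e. h ` e) ` edges G \<subseteq> Pow {0..<7}"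
  proof
    fix e' assume "e' \<in> (\<lambda>e. h ` e) ` edges G"
    then obtain e where e: "e \<in> edges G" "e' = h ` e" by blast
    have "h ` e \<subseteq> {0..<card (verts G)}" using eV[OF e(1)] h unfolding bij_betw_def by blast
    then show "e' \<in> Pow {0..<7}" using e c by auto
  qed
  then have XC: "X \<in> Canon" unfolding Canon_def X_def using c by force
  have "adj G x y = adj X (h x) (h y)" if x: "x \<in> verts G" and y: "y \<in> verts G" for x y
  proof
    assume "adj G x y"
    then have "{x, y} \<in> edges G" unfolding adj_def .
    then have "h ` {x, y} \<in> (\<lambda>e. h ` e) ` edges G" by (rule imageI)
    then have "{h x, h y} \<in> (\<lambda>e. h ` e) ` edges G" by simp
    then show "adj X (h x) (h y)" unfolding adj_def X_def edges_def by simp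
  next
    assume "adj X (h x) (h y)"
    then obtain e where e: "e \<in> edges G" "h ` e = {h x, h y}" unfolding adj_def X_def edges_def by auto
    have "h ` e = h ` {x, y}" using e by simp
    moreover have "{x, y} \<subseteq> verts G" using x y by simp
    ultimately have "e = {x, y}" using inj_on_image_eq_iff[OF inj eV[OF e(1)]] by blast
    then show "adj G x y" using e unfolding adj_def by simp
  qed
  moreover have "bij_betw h (verts G) (verts X)" using h unfolding X_def verts_def by simp
  ultimately have "isom h G X" unfolding isom_def by blast
  then show ?thesis using XC graph_iso_isom by blast
qed

lemma noCycLad:
  assumes k: "3 \<le> k" and inj: "inj_on g {0..<k}" and c: "\<forall>i<k. lad (g i) (g (succ k i))"
  shows False
proof -
  have ne: "g ` {0..<k} \<noteq> {}" using k by auto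
  define m where "m = Max (g ` {0..<k})"
  have "m \<in> g ` {0..<k}" unfolding m_def using ne by simp
  then obtain i where i: "i < k" "g i = m" by auto
  have mx: "g j \<le> m" if "j < k" for j unfolding m_def using that by simp
  define p where "p = (if i = 0 then k - 1 else i - 1)"
  have pk: "p < k" and sp: "succ k p = i" unfolding p_def succ_def using i k by auto
  have sk: "succ k i < k" unfolding succ_def using i k by auto
  have ne2: "succ k i \<noteq> p" unfolding p_def succ_def using i k by auto
  have l1: "lad m (g (succ k i))" using c i by auto
  have l2: "lad (g p) m" using c pk sp i by metis
  have "g (succ k i) = m - 1" using l1 mx[OF sk] unfolding lad_def by auto
  moreover have "g p = m - 1" using l2 mx[OF pk] unfolding lad_def by auto
  ultimately have "g (succ k i) = g p" by simp
  then have "succ k i = p" using inj sk pk unfolding inj_on_def by auto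
  then show False using ne2 by simp
qed



definition vec :: "nat set \<Rightarrow> nat \<times> nat \<times> nat \<times> nat" where
  "vec A = (xp A 0, xp A 1, xp A 3, xp A 5)"
definition goodA :: "nat set \<Rightarrow> bool" where
  "goodA A \<longleftrightarrow> finite A \<and> (\<forall>s t. comp A s t \<longrightarrow> t - s = 0 \<or> t - s = 1 \<or> t - s = 3 \<or> t - s = 5)"
definition F3 :: "nat \<times> nat \<times> nat \<times> nat \<Rightarrow> graph" where
  "F3 y = lfg (SOME A. goodA A \<and> vec A = y)"
definition Y3 :: "nat \<Rightarrow> (nat \<times> nat \<times> nat \<times> nat) set" where
  "Y3 N = {(a, b, c, d). a \<le> 1 \<and> b \<le> N + 2 \<and> c \<le> N + 2 \<and> d \<le> N + 2 \<and>
      (2 * a + 3 * b + 5 * c + 7 * d = N + 1 \<or> 2 * a + 3 * b + 5 * c + 7 * d = N + 2)}"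
definition F2 :: "nat \<times> bool \<Rightarrow> graph" where
  "F2 y = (if snd y then cyc1 (fst y) else cycle_graph (fst y))"

lemma xp_zero_good:
  assumes "goodA A" "d \<noteq> 0" "d \<noteq> 1" "d \<noteq> 3" "d \<noteq> 5" shows "xp A d = 0"
proof -
  have E: "{p \<in> Cp A. snd p - fst p = d} = {}"
  proof (rule equals0I)
    fix p assume p: "p \<in> {p \<in> Cp A. snd p - fst p = d}"
    obtain s t where pd: "p = (s, t)" by (cases p) auto
    then have c: "comp A s t" and e: "t - s = d" using p unfolding Cp_def by auto
    have "t - s = 0 \<or> t - s = 1 \<or> t - s = 3 \<or> t - s = 5" using assms(1) c unfolding goodA_def by blast
    then show False using e assms(2-5) by auto
  qed
  show ?thesis unfolding xp_def E by simp
qed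

lemma xp_eq_vec:
  assumes "goodA A" "goodA B" "vec A = vec B" shows "\<forall>d. xp A d = xp B d"
proof
  fix d show "xp A d = xp B d"
  proof (cases "d = 0 \<or> d = 1 \<or> d = 3 \<or> d = 5")
    case True then show ?thesis using assms(3) unfolding vec_def by auto
  next
    case False then show ?thesis using xp_zero_good[OF assms(1)] xp_zero_good[OF assms(2)] by auto
  qed
qed

lemma F3_iso:
  assumes "goodA A" shows "graph_iso (lfg A) (F3 (vec A))"
proof -
  have ex: "\<exists>B. goodA B \<and> vec B = vec A" using assms by blast
  define B where "B = (SOME B. goodA B \<and> vec B = vec A)"
  have B: "goodA B" "vec B = vec A" using someI_ex[OF ex] unfolding B_def by auto
  have "\<forall>d. xp A d = xp B d" using xp_eq_vec[OF assms B(1)] B(2) by simp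
  moreover have "finite A" using assms unfolding goodA_def by simp
  moreover have "finite B" using B(1) unfolding goodA_def by simp
  ultimately obtain h where h: "isom h (lfg A) (lfg B)" using iso_by_xp by blast
  have "F3 (vec A) = lfg B" unfolding F3_def B_def by simp
  then show ?thesis using h unfolding graph_iso_isom by auto
qed

lemma finite_Y3: "finite (Y3 N)"
proof -
  have "Y3 N \<subseteq> {..1} \<times> {..N+2} \<times> {..N+2} \<times> {..N+2}" unfolding Y3_def by auto
  then show ?thesis by (rule finite_subset) simp
qed

lemma card_Y3: "card (Y3 N) \<le> 2 * ((N + 3) * ((N + 3) * 2))"
proof -
  define \<pi> where "\<pi> = (\<lambda>(a::nat, b::nat, c::nat, d::nat). (a, b, c, 2 * a + 3 * b + 5 * c + 7 * d - (N + 1)))"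
  have "inj_on \<pi> (Y3 N)"
  proof (rule inj_onI)
    fix x y assume x: "x \<in> Y3 N" and y: "y \<in> Y3 N" and e: "\<pi> x = \<pi> y"
    obtain a b c d where xd: "x = (a, b, c, d)" by (cases x) auto
    obtain a' b' c' d' where yd: "y = (a', b', c', d')" by (cases y) auto
    show "x = y" using x y e unfolding xd yd \<pi>_def Y3_def by auto
  qed
  moreover have "\<pi> ` Y3 N \<subseteq> {..1} \<times> {..N+2} \<times> {..N+2} \<times> {..1}"
    unfolding \<pi>_def Y3_def by auto
  ultimately have "card (Y3 N) \<le> card ({..1::nat} \<times> {..N+2} \<times> {..N+2} \<times> {..1::nat})"
    by (intro card_inj_on_le) auto
  also have "\<dots> = 2 * ((N + 3) * ((N + 3) * 2))"
  proof -
    have a: "card {..1::nat} = 2" by simp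
    have b: "card {..N+2} = N + 3" by simp
    show ?thesis unfolding card_cartesian_product a b ..
  qed
  finally show ?thesis .
qed

lemma S3_rep:
  assumes gH: "goodH H N" and ob: "minimal_obstruction H G" and d2: "deg2 G"
    and nc: "\<not> hascyc (adj G) (verts G)"
  shows "\<exists>y\<in>Y3 N. graph_iso G (F3 y)"
proof -
  have wfH: "wf_graph H" and P2: "\<forall>S \<subseteq> verts H. 2 * card S \<le> N + card {e \<in> edges H. e \<subseteq> S}"
    and P3: "\<forall>x y. x + 1 < N \<longrightarrow> y + 1 < N \<longrightarrow> x \<in> verts H \<and> (adj H x y \<longleftrightarrow> lad x y)"
    using gH unfolding goodH_def by auto
  have wfG: "wf_graph G" using ob unfolding minimal_obstruction_def by blast
  obtain f A where finA: "finite A" and i: "isom f G (lfg A)" using lf_case[OF wfG d2 nc] by blast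
  have obA: "minimal_obstruction H (lfg A)" using obstruction_iso[OF ob i wf_lfg[OF finA]] .
  note L = LF_main[OF wfH P2 P3 finA obA]
  have gA: "goodA A" using finA L(1) unfolding goodA_def by blast
  have mf: "mm A = 2 * xp A 0 + 3 * xp A 1 + 5 * xp A 3 + 7 * xp A 5" using mm_formula[OF finA L(1)] .
  have x0: "xp A 0 \<le> 1"
  proof -
    have fin0: "finite {p \<in> Cp A. snd p - fst p = 0}" using finite_Cp[OF finA] by simp
    have "\<forall>p\<in>{p \<in> Cp A. snd p - fst p = 0}. \<forall>q\<in>{p \<in> Cp A. snd p - fst p = 0}. p = q"
    proof (intro ballI)
      fix p q assume p: "p \<in> {p \<in> Cp A. snd p - fst p = 0}" and q: "q \<in> {p \<in> Cp A. snd p - fst p = 0}"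
      obtain s t where pd: "p = (s, t)" by (cases p) auto
      obtain s' t' where qd: "q = (s', t')" by (cases q) auto
      have "comp A s t" "t - s = 0" using p pd unfolding Cp_def by auto
      then have cs: "comp A s s" using compD(1)[OF \<open>comp A s t\<close>] by simp
      then have "t = s" using \<open>t - s = 0\<close> compD(1)[OF \<open>comp A s t\<close>] by simp
      have "comp A s' t'" "t' - s' = 0" using q qd unfolding Cp_def by auto
      then have cs': "comp A s' s'" using compD(1)[OF \<open>comp A s' t'\<close>] by simp
      then have "t' = s'" using \<open>t' - s' = 0\<close> compD(1)[OF \<open>comp A s' t'\<close>] by simp
      have "s = s'" using L(2) cs cs' by blast
      then show "p = q" using pd qd \<open>t = s\<close> \<open>t' = s'\<close> by simp
    qed
    then show ?thesis unfolding xp_def using card_le_Suc0_iff_eq[OF fin0] by simp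
  qed
  have "vec A \<in> Y3 N" unfolding vec_def Y3_def using L(3) L(4) mf x0 by auto
  moreover have "graph_iso G (F3 (vec A))"
    using graph_iso_trans[OF _ F3_iso[OF gA]] i graph_iso_isom by blast
  ultimately show ?thesis by blast
qed

lemma S2_rep:
  assumes gH: "goodH H N" and ob: "minimal_obstruction H G" and d2: "deg2 G"
    and hc: "hascyc (adj G) (verts G)"
  shows "\<exists>y\<in>{..N} \<times> (UNIV :: bool set). graph_iso G (F2 y)"
proof -
  have wfH: "wf_graph H" and P2: "\<forall>S \<subseteq> verts H. 2 * card S \<le> N + card {e \<in> edges H. e \<subseteq> S}"
    using gH unfolding goodH_def by auto
  obtain k where k: "3 \<le> k" "k \<noteq> 4" and cs: "(\<exists>f. isom f G (cycle_graph k)) \<or> (\<exists>f. isom f G (cyc1 k))"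
    using cycle_case[OF gH ob d2 hc] by blast
  from cs show ?thesis
  proof
    assume "\<exists>f. isom f G (cycle_graph k)"
    then obtain f where i: "isom f G (cycle_graph k)" by blast
    have "minimal_obstruction H (cycle_graph k)" using obstruction_iso[OF ob i wf_cycle] k by simp
    then have "k \<le> N" using cycle_bound[OF wfH P2 k] by blast
    moreover have "graph_iso G (F2 (k, False))" using i unfolding F2_def graph_iso_isom by auto
    ultimately show ?thesis by blast
  next
    assume "\<exists>f. isom f G (cyc1 k)"
    then obtain f where i: "isom f G (cyc1 k)" by blast
    have "minimal_obstruction H (cyc1 k)" using obstruction_iso[OF ob i wf_cyc1] k by simp
    then have "k + 2 \<le> N" using cyc1_bound[OF wfH P2 k] by blast
    moreover have "graph_iso G (F2 (k, True))" using i unfolding F2_def graph_iso_isom by auto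
    ultimately show ?thesis by force
  qed
qed

lemma S1_rep:
  assumes gH: "goodH H N" and ob: "minimal_obstruction H G" and d2: "\<not> deg2 G"
  shows "\<exists>X\<in>Canon. graph_iso G X"
proof -
  have wfG: "wf_graph G" using ob unfolding minimal_obstruction_def by blast
  obtain x a b c where "adj G x a" "adj G x b" "adj G x c" "a \<noteq> b" "a \<noteq> c" "b \<noteq> c"
    using d2 unfolding deg2_def by blast
  then have "card (verts G) \<le> 7" using deg3_small[OF gH ob] by blast
  then show ?thesis using canon_exists[OF wfG] by blast
qed

lemma generic_count:
  assumes gH: "goodH H N"
  shows "obstructions_up_to_iso_at_most H (real (card Canon + 2 * (N + 1) + 2 * ((N + 3) * ((N + 3) * 2))))"
  unfolding obstructions_up_to_iso_at_most_def
proof (intro allI impI)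
  fix SS :: "graph set"
  assume fin: "finite SS" and ob: "\<forall>G\<in>SS. minimal_obstruction H G"
    and ni: "\<forall>G\<in>SS. \<forall>G'\<in>SS. G \<noteq> G' \<longrightarrow> \<not> graph_iso G G'"
  define S1 where "S1 = {G\<in>SS. \<not> deg2 G}"
  define S2 where "S2 = {G\<in>SS. deg2 G \<and> hascyc (adj G) (verts G)}"
  define S3 where "S3 = {G\<in>SS. deg2 G \<and> \<not> hascyc (adj G) (verts G)}"
  have U: "SS = S1 \<union> S2 \<union> S3" unfolding S1_def S2_def S3_def by auto
  have f1: "finite S1" "finite S2" "finite S3" using fin unfolding S1_def S2_def S3_def by auto
  have c1: "card S1 \<le> card Canon"
    by (rule count_by_reps[where F = id]) (use f1 ni S1_rep[OF gH] ob finite_Canon in \<open>auto simp: S1_def\<close>)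
  have c2: "card S2 \<le> card ({..N} \<times> (UNIV :: bool set))"
    by (rule count_by_reps[where F = F2]) (use f1 ni S2_rep[OF gH] ob in \<open>auto simp: S2_def\<close>)
  have c3: "card S3 \<le> card (Y3 N)"
    by (rule count_by_reps[where F = F3]) (use f1 ni S3_rep[OF gH] ob finite_Y3 in \<open>auto simp: S3_def\<close>)
  have "card ({..N} \<times> (UNIV :: bool set)) = 2 * (N + 1)" by (simp add: card_cartesian_product)
  moreover have "card SS \<le> card (S1 \<union> S2) + card S3" using U card_Un_le[of "S1 \<union> S2" S3] by simp
  ultimately have "card SS \<le> card Canon + 2 * (N + 1) + 2 * ((N + 3) * ((N + 3) * 2))"
    using c1 c2 c3 card_Y3[of N] card_Un_le[of S1 S2] by linarith
  then show "real (card SS) \<le> real (card Canon + 2 * (N + 1) + 2 * ((N + 3) * ((N + 3) * 2)))"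
    by (simp only: of_nat_le_iff)
qed



lemma path_lfg: "path_graph n = lfg {0..<n}"
proof -
  have "{{i, Suc i} | i. Suc i < n} = {{a, Suc a} | a. a \<in> {0..<n} \<and> Suc a \<in> {0..<n}}" by auto
  then show ?thesis unfolding path_graph_def lfg_def by simp
qed

lemma edges_lfg_sub:
  assumes "S \<subseteq> B"
  shows "{e \<in> edges (lfg B). e \<subseteq> S} = (\<lambda>a. {a, Suc a}) ` ed S"
  using assms unfolding lfg_def edges_def ed_def by auto

lemma card_edges_lfg: "card ((\<lambda>a. {a, Suc a}) ` ed S) = card (ed S)"
  by (rule card_image) (auto simp: inj_on_def doubleton_eq_iff)

lemma good_path:
  assumes n: "1 \<le> n" shows "goodH (path_graph n) (n + 1)"
  unfolding goodH_def path_lfg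
proof (intro conjI)
  show "wf_graph (lfg {0..<n})" by (rule wf_lfg) simp
  show "2 \<le> n + 1" using n by simp
  show "\<forall>x a b c. adj (lfg {0..<n}) x a \<longrightarrow> adj (lfg {0..<n}) x b \<longrightarrow> adj (lfg {0..<n}) x c \<longrightarrow> a = b \<or> a = c \<or> b = c"
    by (auto simp: adj_lfg lad_def)
  show "\<forall>S \<subseteq> verts (lfg {0..<n}). 2 * card S \<le> n + 1 + card {e \<in> edges (lfg {0..<n}). e \<subseteq> S}"
  proof (intro allI impI)
    fix S assume S: "S \<subseteq> verts (lfg {0..<n})"
    then have S': "S \<subseteq> {0..<n}" by simp
    have finS: "finite S" using S' finite_subset by blast
    have E: "card {e \<in> edges (lfg {0..<n}). e \<subseteq> S} = card (ed S)"
      using edges_lfg_sub[OF S'] card_edges_lfg by simp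
    have "Suc ` ends S \<subseteq> {0..n} - S" using S' unfolding ends_def by auto
    moreover have "inj_on Suc (ends S)" by simp
    ultimately have "card (ends S) \<le> card ({0..n} - S)"
      by (metis card_image card_mono finite_Diff finite_atLeastAtMost)
    moreover have "card ({0..n} - S) = n + 1 - card S"
      using S' by (subst card_Diff_subset) (auto intro: finite_subset)
    ultimately have "card (ends S) + card S \<le> n + 1"
      using card_mono[of "{0..n}" S] S' by force
    then show "2 * card S \<le> n + 1 + card {e \<in> edges (lfg {0..<n}). e \<subseteq> S}"
      using E card_ed_ends[OF finS] by linarith
  qed
  show "\<forall>x y. x + 1 < n + 1 \<longrightarrow> y + 1 < n + 1 \<longrightarrow> x \<in> verts (lfg {0..<n}) \<and> (adj (lfg {0..<n}) x y \<longleftrightarrow> lad x y)"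
    by (auto simp: adj_lfg)
  show "\<forall>k g. 3 \<le> k \<longrightarrow> inj_on g {0..<k} \<longrightarrow> (\<forall>i<k. adj (lfg {0..<n}) (g i) (g (succ k i))) \<longrightarrow> g ` {0..<k} = verts (lfg {0..<n})"
  proof (intro allI impI)
    fix k g assume k: "3 \<le> k" and inj: "inj_on g {0..<k}" and a: "\<forall>i<k. adj (lfg {0..<n}) (g i) (g (succ k i))"
    have "\<forall>i<k. lad (g i) (g (succ k i))" using a by (simp add: adj_lfg)
    then show "g ` {0..<k} = verts (lfg {0..<n})" using noCycLad[OF k inj] by blast
  qed
qed


lemma good_cycle:
  assumes n: "3 \<le> n" shows "goodH (cycle_graph n) n"
  unfolding goodH_def
proof (intro conjI)
  have n2: "2 \<le> n" using n by simp
  show "wf_graph (cycle_graph n)" using wf_cycle[OF n2] .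
  show "2 \<le> n" using n2 .
  show "\<forall>x a b c. adj (cycle_graph n) x a \<longrightarrow> adj (cycle_graph n) x b \<longrightarrow> adj (cycle_graph n) x c \<longrightarrow> a = b \<or> a = c \<or> b = c"
  proof (intro allI impI)
    fix x a b c assume a: "adj (cycle_graph n) x a" and b: "adj (cycle_graph n) x b" and c: "adj (cycle_graph n) x c"
    have A: "x < n" "a < n" "b < n" "c < n" "a = succ n x \<or> x = succ n a" "b = succ n x \<or> x = succ n b"
      "c = succ n x \<or> x = succ n c" using a b c adj_cycle[OF n2] by auto
    have "x = succ n p \<Longrightarrow> x = succ n q \<Longrightarrow> p < n \<Longrightarrow> q < n \<Longrightarrow> p = q" for p q using succ_inj by metis
    then show "a = b \<or> a = c \<or> b = c" using A by metis
  qed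
  show "\<forall>S \<subseteq> verts (cycle_graph n). 2 * card S \<le> n + card {e \<in> edges (cycle_graph n). e \<subseteq> S}"
  proof (intro allI impI)
    fix S assume S: "S \<subseteq> verts (cycle_graph n)"
    then have S': "S \<subseteq> {0..<n}" by simp
    have finS: "finite S" using S' finite_subset by blast
    have ES: "{e \<in> edges (cycle_graph n). e \<subseteq> S} = (\<lambda>i. {i, succ n i}) ` {i\<in>S. succ n i \<in> S}"
    proof
      show "{e \<in> edges (cycle_graph n). e \<subseteq> S} \<subseteq> (\<lambda>i. {i, succ n i}) ` {i\<in>S. succ n i \<in> S}"
      proof
        fix e assume "e \<in> {e \<in> edges (cycle_graph n). e \<subseteq> S}"
        then obtain i where i: "i < n" "e = {i, Suc i mod n}" "e \<subseteq> S"
          unfolding cycle_graph_def edges_def by auto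
        then have "e = {i, succ n i}" using suc_mod_succ by simp
        then show "e \<in> (\<lambda>i. {i, succ n i}) ` {i\<in>S. succ n i \<in> S}" using i by auto
      qed
      show "(\<lambda>i. {i, succ n i}) ` {i\<in>S. succ n i \<in> S} \<subseteq> {e \<in> edges (cycle_graph n). e \<subseteq> S}"
      proof
        fix e assume "e \<in> (\<lambda>i. {i, succ n i}) ` {i\<in>S. succ n i \<in> S}"
        then obtain i where i: "i \<in> S" "succ n i \<in> S" "e = {i, succ n i}" by auto
        have "i < n" using i S' by auto
        then have "e = {i, Suc i mod n}" using i suc_mod_succ by simp
        then have "e \<in> edges (cycle_graph n)" using \<open>i < n\<close> unfolding cycle_graph_def edges_def by auto
        then show "e \<in> {e \<in> edges (cycle_graph n). e \<subseteq> S}" using i by auto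
      qed
    qed
    have inj2: "inj_on (\<lambda>i. {i, succ n i}) {i\<in>S. succ n i \<in> S}"
    proof (rule inj_onI)
      fix i j assume i: "i \<in> {i\<in>S. succ n i \<in> S}" and j: "j \<in> {i\<in>S. succ n i \<in> S}"
        and e: "{i, succ n i} = {j, succ n j}"
      have "i < n" "j < n" using i j S' by auto
      show "i = j"
      proof (rule ccontr)
        assume "i \<noteq> j"
        then have h: "i = succ n j" "j = succ n i" using e by (auto simp: doubleton_eq_iff)
        have s1: "Suc j = n \<Longrightarrow> i = 0" "Suc j \<noteq> n \<Longrightarrow> i = Suc j" using h(1) unfolding succ_def by auto
        have s2: "Suc i = n \<Longrightarrow> j = 0" "Suc i \<noteq> n \<Longrightarrow> j = Suc i" using h(2) unfolding succ_def by auto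
        show False
        proof (cases "Suc j = n")
          case True
          then have i0: "i = 0" using s1 by simp
          then have "Suc i \<noteq> n" using n by simp
          then have "j = Suc i" using s2 by simp
          then show False using True i0 n by simp
        next
          case False
          then have ij: "i = Suc j" using s1 by simp
          show False
          proof (cases "Suc i = n")
            case True then have "j = 0" using s2 by simp
            then show False using True ij n by simp
          next
            case False then have "j = Suc i" using s2 by simp
            then show False using ij by simp
          qed
        qed
      qed
    qed
    have E: "card {e \<in> edges (cycle_graph n). e \<subseteq> S} = card {i\<in>S. succ n i \<in> S}"
      using ES card_image[OF inj2] by simp
    have injs: "inj_on (succ n) {i\<in>S. succ n i \<notin> S}"
    proof (rule inj_onI)
      fix x y assume "x \<in> {i\<in>S. succ n i \<notin> S}" "y \<in> {i\<in>S. succ n i \<notin> S}" "succ n x = succ n y"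
      moreover have "x < n" "y < n" using calculation S' by auto
      ultimately show "x = y" using succ_inj by blast
    qed
    have "succ n ` {i\<in>S. succ n i \<notin> S} \<subseteq> {0..<n} - S"
      using S' n unfolding succ_def by auto
    then have "card (succ n ` {i\<in>S. succ n i \<notin> S}) \<le> card ({0..<n} - S)"
      by (intro card_mono) auto
    then have "card {i\<in>S. succ n i \<notin> S} \<le> card ({0..<n} - S)"
      using card_image[OF injs] by simp
    moreover have "card ({0..<n} - S) = n - card S"
      using S' by (subst card_Diff_subset) (auto intro: finite_subset)
    moreover have "card S \<le> n" using card_mono[of "{0..<n}" S] S' by simp
    moreover have "card S = card {i\<in>S. succ n i \<in> S} + card {i\<in>S. succ n i \<notin> S}"
    proof -
      have "S = {i\<in>S. succ n i \<in> S} \<union> {i\<in>S. succ n i \<notin> S}" by auto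
      moreover have "finite {i\<in>S. succ n i \<in> S}" "finite {i\<in>S. succ n i \<notin> S}" using finS by auto
      ultimately show ?thesis by (metis (no_types, lifting) card_Un_disjoint disjoint_iff mem_Collect_eq)
    qed
    ultimately show "2 * card S \<le> n + card {e \<in> edges (cycle_graph n). e \<subseteq> S}" using E by linarith
  qed
  show "\<forall>x y. x + 1 < n \<longrightarrow> y + 1 < n \<longrightarrow> x \<in> verts (cycle_graph n) \<and> (adj (cycle_graph n) x y \<longleftrightarrow> lad x y)"
    by (auto simp: adj_cycle[OF n2] lad_def succ_def)
  show "\<forall>k g. 3 \<le> k \<longrightarrow> inj_on g {0..<k} \<longrightarrow> (\<forall>i<k. adj (cycle_graph n) (g i) (g (succ k i))) \<longrightarrow> g ` {0..<k} = verts (cycle_graph n)"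
  proof (intro allI impI)
    fix k g assume k: "3 \<le> k" and inj: "inj_on g {0..<k}" and a: "\<forall>i<k. adj (cycle_graph n) (g i) (g (succ k i))"
    have sk: "succ k i < k" if "i < k" for i using that k unfolding succ_def by auto
    have gn: "g i < n" if "i < k" for i using a that adj_cycle[OF n2] by blast
    show "g ` {0..<k} = verts (cycle_graph n)"
    proof
      show "g ` {0..<k} \<subseteq> verts (cycle_graph n)" using gn by auto
      show "verts (cycle_graph n) \<subseteq> g ` {0..<k}"
      proof (rule ccontr)
        assume "\<not> ?thesis"
        then obtain j where j0: "j \<in> verts (cycle_graph n)" "j \<notin> g ` {0..<k}" by blast
        then have j: "j < n" "j \<notin> g ` {0..<k}" by auto
        define \<rho> where "\<rho> = (\<lambda>x. if j < x then x - j - 1 else x + n - 1 - j)"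
        have gj: "g i \<noteq> j" if "i < k" for i using j that by auto
        have rl: "lad (\<rho> x) (\<rho> y)" if x: "x < n" "x \<noteq> j" and y: "y < n" "y \<noteq> j"
          and ad: "adj (cycle_graph n) x y" for x y
        proof -
          have "y = succ n x \<or> x = succ n y" using ad adj_cycle[OF n2] by simp
          then show ?thesis using x y j unfolding \<rho>_def succ_def lad_def by (auto split: if_splits)
        qed
        have ri: "\<rho> x = \<rho> y \<Longrightarrow> x < n \<Longrightarrow> y < n \<Longrightarrow> x \<noteq> j \<Longrightarrow> y \<noteq> j \<Longrightarrow> x = y" for x y
          using j unfolding \<rho>_def by (auto split: if_splits)
        have "inj_on (\<rho> \<circ> g) {0..<k}"
        proof (rule inj_onI)
          fix i i' assume i: "i \<in> {0..<k}" and i': "i' \<in> {0..<k}" and e: "(\<rho> \<circ> g) i = (\<rho> \<circ> g) i'"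
          have "g i = g i'" using ri[of "g i" "g i'"] e gn gj i i' by auto
          then show "i = i'" using inj i i' unfolding inj_on_def by blast
        qed
        moreover have "\<forall>i<k. lad ((\<rho> \<circ> g) i) ((\<rho> \<circ> g) (succ k i))"
          using rl gn gj sk a by simp
        ultimately show False using noCycLad[OF k] by blast
      qed
    qed
  qed
qed



lemma mono_obs:
  assumes "obstructions_up_to_iso_at_most H a" "a \<le> b"
  shows "obstructions_up_to_iso_at_most H b"
  using assms unfolding obstructions_up_to_iso_at_most_def by (meson order_trans)

lemma final_arith:
  fixes n C0 :: nat
  assumes n: "1 \<le> n"
  shows "C0 + 2 * (n + 1 + 1) + 2 * ((n + 1 + 3) * ((n + 1 + 3) * 2)) \<le> (C0 + 106) * (n * n)"
    and "C0 + 2 * (n + 1) + 2 * ((n + 3) * ((n + 3) * 2)) \<le> (C0 + 106) * (n * n)"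
proof -
  define m where "m = n * n"
  have m1: "n \<le> m" unfolding m_def using n by simp
  have m2: "1 \<le> m" unfolding m_def using n by simp
  have m3: "C0 \<le> C0 * m" using m2 by simp
  have e1: "2 * ((n + 1 + 3) * ((n + 1 + 3) * 2)) = 4 * m + 32 * n + 64" unfolding m_def by (simp add: algebra_simps)
  have e2: "2 * ((n + 3) * ((n + 3) * 2)) = 4 * m + 24 * n + 36" unfolding m_def by (simp add: algebra_simps)
  have e3: "(C0 + 106) * m = C0 * m + 106 * m" by (simp add: algebra_simps)
  have "C0 + 2 * (n + 1 + 1) + 2 * ((n + 1 + 3) * ((n + 1 + 3) * 2)) = C0 + 2 * n + 4 + (4 * m + 32 * n + 64)"
    using e1 by simp
  also have "\<dots> \<le> C0 * m + 106 * m" using m1 m2 m3 by linarith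
  also have "\<dots> = (C0 + 106) * (n * n)" using e3 unfolding m_def by simp
  finally show "C0 + 2 * (n + 1 + 1) + 2 * ((n + 1 + 3) * ((n + 1 + 3) * 2)) \<le> (C0 + 106) * (n * n)" .
  have "C0 + 2 * (n + 1) + 2 * ((n + 3) * ((n + 3) * 2)) = C0 + 2 * n + 2 + (4 * m + 24 * n + 36)"
    using e2 by simp
  also have "\<dots> \<le> C0 * m + 106 * m" using m1 m2 m3 by linarith
  also have "\<dots> = (C0 + 106) * (n * n)" using e3 unfolding m_def by simp
  finally show "C0 + 2 * (n + 1) + 2 * ((n + 3) * ((n + 3) * 2)) \<le> (C0 + 106) * (n * n)" .
qed

theorem corollary4p3:
  shows "\<exists>c::real. \<forall>n::nat.
     (n \<ge> 1 \<longrightarrow> obstructions_up_to_iso_at_most (path_graph n) (c * real n ^ 2)) \<and>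
     (n \<ge> 3 \<longrightarrow> obstructions_up_to_iso_at_most (cycle_graph n) (c * real n ^ 2))"
proof -
  define C0 where "C0 = card Canon"
  define c where "c = real (C0 + 106)"
  have "\<forall>n::nat.
     (n \<ge> 1 \<longrightarrow> obstructions_up_to_iso_at_most (path_graph n) (c * real n ^ 2)) \<and>
     (n \<ge> 3 \<longrightarrow> obstructions_up_to_iso_at_most (cycle_graph n) (c * real n ^ 2))"
  proof (intro allI conjI impI)
    fix n :: nat
    assume n: "1 \<le> n"
    have g: "obstructions_up_to_iso_at_most (path_graph n)
        (real (C0 + 2 * (n + 1 + 1) + 2 * ((n + 1 + 3) * ((n + 1 + 3) * 2))))"
      using generic_count[OF good_path[OF n]] unfolding C0_def .
    have "real (C0 + 2 * (n + 1 + 1) + 2 * ((n + 1 + 3) * ((n + 1 + 3) * 2))) \<le> real ((C0 + 106) * (n * n))"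
      using final_arith(1)[OF n, of C0] by (simp only: of_nat_le_iff)
    also have "\<dots> = c * real n ^ 2" unfolding c_def by (simp add: power2_eq_square)
    finally show "obstructions_up_to_iso_at_most (path_graph n) (c * real n ^ 2)" using mono_obs[OF g] by blast
  next
    fix n :: nat
    assume n3: "3 \<le> n"
    then have n: "1 \<le> n" by simp
    have g: "obstructions_up_to_iso_at_most (cycle_graph n)
        (real (C0 + 2 * (n + 1) + 2 * ((n + 3) * ((n + 3) * 2))))"
      using generic_count[OF good_cycle[OF n3]] unfolding C0_def .
    have "real (C0 + 2 * (n + 1) + 2 * ((n + 3) * ((n + 3) * 2))) \<le> real ((C0 + 106) * (n * n))"
      using final_arith(2)[OF n, of C0] by (simp only: of_nat_le_iff)
    also have "\<dots> = c * real n ^ 2" unfolding c_def by (simp add: power2_eq_square)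
    finally show "obstructions_up_to_iso_at_most (cycle_graph n) (c * real n ^ 2)" using mono_obs[OF g] by blast
  qed
  then show ?thesis by blast
qed


end
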